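(* Let $\mathcal{T}$ be a stiffly-connected, edge-simple 3-dimensional truss with $n$ vertices and diameter $\Delta$, and let $\mathbf{q}$ be a unit vector orthogonal to the null space of its stiffness matrix. Then there exist an oriented triangle $s$ and a pair of vertices $i,j$ within tetrahedron-distance $O(1)$ of $s$ such that $\|\bar{\mathbf{q}}^{\langle s\rangle}_i-\bar{\mathbf{q}}^{\langle s\rangle}_j\|_2^2=\Omega\left(\frac{1}{\Delta^4 n}\right)$.
   Context: A 3-dimensional truss has $n$ vertices at distinct points $\mathbf{p}_i\in\mathbb{R}^3$, a set of tetrahedra (four vertices each), edges all pairs of vertices sharing a tetrahedron, and positive stiffness coefficients $\gamma(e)$; its stiffness matrix is $\sum_{e=(i,j)}\frac{\gamma(e)}{\|\mathbf{p}_i-\mathbf{p}_j\|_2}\mathbf{b}^{(e)}\mathbf{b}^{(e)\top}$ where $\mathbf{b}^{(e)}\in\mathbb{R}^{3n}$ has block $i$ equal to $(\mathbf{p}_i-\mathbf{p}_j)/\|\mathbf{p}_i-\mathbf{p}_j\|_2$, block $j$ its negative, zeros elsewhere. Edge-simple: tetrahedra form a simplicial complex, each has constant-bounded aspect ratio, and edge lengths and stiffness coefficients are bounded above and below by positive constants. Stiffly-connected: the graph on tetrahedra with adjacency = sharing a triangle face is connected, and for each vertex its restriction to the tetrahedra containing that vertex is connected. The diameter $\Delta$ is the maximum over vertex pairs of the number of edges on a shortest path. For $\mathbf{v}\in\mathbb{R}^{3n}$, $\mathbf{v}_i\in\mathbb{R}^3$ is its $i$-th block. Fix an index $c$ and define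 $\mathbf{p}^{\perp xy}_i=[-(\mathbf{p}_i-\mathbf{p}_c)_y,(\mathbf{p}_i-\mathbf{p}_c)_x,0]^\top$, $\mathbf{p}^{\perp xz}_i=[-(\mathbf{p}_i-\mathbf{p}_c)_z,0,(\mathbf{p}_i-\mathbf{p}_c)_x]^\top$, $\mathbf{p}^{\perp yz}_i=[0,-(\mathbf{p}_i-\mathbf{p}_c)_z,(\mathbf{p}_i-\mathbf{p}_c)_y]^\top$. For an oriented triangle $s=\langle s_1,s_2,s_3\rangle$ (ordered triple of vertices of a triangle face), the centering $\bar{\mathbf{q}}^{\langle s\rangle}$ of $\mathbf{q}$ is the vector $\mathbf{q}+\sum_{d_1d_2\in\{xy,xz,yz\}}c^{\langle s\rangle\perp d_1d_2}\mathbf{p}^{\perp d_1d_2}$ (with real scalars $c$) such that the plane through $\bar{\mathbf{q}}^{\langle s\rangle}_{s_1},\bar{\mathbf{q}}^{\langle s\rangle}_{s_2},\bar{\mathbf{q}}^{\langle s\rangle}_{s_3}$ is parallel to the plane through $\mathbf{p}_{s_1},\mathbf{p}_{s_2},\mathbf{p}_{s_3}$ and $\bar{\mathbf{q}}^{\langle s\rangle}_{s_1}-\bar{\mathbf{q}}^{\langle s\rangle}_{s_2}$ is parallel to $\mathbf{p}_{s_1}-\mathbf{p}_{s_2}$. The tetrahedron-distance between objects $x$ and $y$ of the complex is the smallest $d$ for which there is a sequence of tetrahedra $t^{(0)},\dots,t^{(d)}$ with $x\subseteq t^{(0)}$, $y\subseteq t^{(d)}$, and consecutive tetrahedra sharing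 a triangle face. Constants depend only on the constant bounds above. *)

theory Defs
  imports "HOL-Analysis.Analysis"
begin

text \<open>Vertices are 0..<n, positions p i :: real^3, tetrahedra are 4-element vertex sets,
  stiffness coefficients are given on 2-element vertex sets (edges).
  Vectors of R^{3n} are functions nat => real^3 that vanish outside 0..<n.\<close>

type_synonym pos = "nat \<Rightarrow> real^3"
type_synonym bvec = "nat \<Rightarrow> real^3"

definition block_vectors :: "nat \<Rightarrow> bvec set" where
  "block_vectors n = {v. \<forall>k\<ge>n. v k = 0}"

definition bip :: "nat \<Rightarrow> bvec \<Rightarrow> bvec \<Rightarrow> real" where
  "bip n v w = (\<Sum>k<n. v k \<bullet> w k)"

definition edges :: "nat set set \<Rightarrow> (nat \<times> nat) set" where
  "edges T = {(i,j). i < j \<and> (\<exists>t\<in>T. i \<in> t \<and> j \<in> t)}"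

definition bvec_e :: "pos \<Rightarrow> nat \<Rightarrow> nat \<Rightarrow> bvec" where
  "bvec_e p i j = (\<lambda>k. if k = i then (1 / norm (p i - p j)) *\<^sub>R (p i - p j)
                    else if k = j then - ((1 / norm (p i - p j)) *\<^sub>R (p i - p j))
                    else 0)"

definition stiffness_apply :: "nat \<Rightarrow> pos \<Rightarrow> nat set set \<Rightarrow> (nat set \<Rightarrow> real) \<Rightarrow> bvec \<Rightarrow> bvec" where
  "stiffness_apply n p T \<gamma> v = (\<lambda>k. \<Sum>(i,j)\<in>edges T.
      ((\<gamma> {i,j} / norm (p i - p j)) * bip n (bvec_e p i j) v) *\<^sub>R bvec_e p i j k)"

definition stiffness_null_space :: "nat \<Rightarrow> pos \<Rightarrow> nat set set \<Rightarrow> (nat set \<Rightarrow> real) \<Rightarrow> bvec set" where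
  "stiffness_null_space n p T \<gamma> =
     {v \<in> block_vectors n. stiffness_apply n p T \<gamma> v = (\<lambda>k. 0)}"

definition tet_volume :: "real^3 \<Rightarrow> real^3 \<Rightarrow> real^3 \<Rightarrow> real^3 \<Rightarrow> real" where
  "tet_volume a b c d = \<bar>(b - a) \<bullet> (cross3 (c - a) (d - a))\<bar> / 6"

definition tri_area :: "real^3 \<Rightarrow> real^3 \<Rightarrow> real^3 \<Rightarrow> real" where
  "tri_area a b c = norm (cross3 (b - a) (c - a)) / 2"

definition aspect_ratio :: "real^3 \<Rightarrow> real^3 \<Rightarrow> real^3 \<Rightarrow> real^3 \<Rightarrow> real" where
  "aspect_ratio a b c d =
     (let L = Max {dist a b, dist a c, dist a d, dist b c, dist b d, dist c d};
          S = tri_area a b c + tri_area a b d + tri_area a c d + tri_area b c d;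
          r = 3 * tet_volume a b c d / S
      in L / r)"

definition tet_aspect_ratio :: "pos \<Rightarrow> nat set \<Rightarrow> real" where
  "tet_aspect_ratio p t = (SOME r. \<exists>a b c d. t = {a,b,c,d} \<and> r = aspect_ratio (p a) (p b) (p c) (p d))"

definition simplicial_complex :: "nat \<Rightarrow> pos \<Rightarrow> nat set set \<Rightarrow> bool" where
  "simplicial_complex n p T \<longleftrightarrow>
     (\<forall>t\<in>T. t \<subseteq> {..<n} \<and> card t = 4 \<and> \<not> affine_dependent (p ` t)) \<and>
     (\<forall>t1\<in>T. \<forall>t2\<in>T. convex hull (p ` t1) \<inter> convex hull (p ` t2) = convex hull (p ` (t1 \<inter> t2)))"

definition edge_simple ::
  "real \<Rightarrow> real \<Rightarrow> real \<Rightarrow> real \<Rightarrow> real \<Rightarrow> nat \<Rightarrow> pos \<Rightarrow> nat set set \<Rightarrow> (nat set \<Rightarrow> real) \<Rightarrow> bool" where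
  "edge_simple A lmin lmax gmin gmax n p T \<gamma> \<longleftrightarrow>
     simplicial_complex n p T \<and>
     (\<forall>t\<in>T. tet_aspect_ratio p t \<le> A) \<and>
     (\<forall>(i,j)\<in>edges T. lmin \<le> dist (p i) (p j) \<and> dist (p i) (p j) \<le> lmax
                       \<and> gmin \<le> \<gamma> {i,j} \<and> \<gamma> {i,j} \<le> gmax)"

definition share_face :: "nat set \<Rightarrow> nat set \<Rightarrow> bool" where
  "share_face t1 t2 \<longleftrightarrow> card (t1 \<inter> t2) = 3"

definition connected_on :: "'a set \<Rightarrow> ('a \<Rightarrow> 'a \<Rightarrow> bool) \<Rightarrow> bool" where
  "connected_on S R \<longleftrightarrow> (\<forall>a\<in>S. \<forall>b\<in>S. (a, b) \<in> {(x,y). x \<in> S \<and> y \<in> S \<and> R x y}\<^sup>*)"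

definition stiffly_connected :: "nat \<Rightarrow> nat set set \<Rightarrow> bool" where
  "stiffly_connected n T \<longleftrightarrow>
     connected_on T share_face \<and>
     (\<forall>v<n. connected_on {t\<in>T. v \<in> t} share_face)"

definition graph_dist :: "nat set set \<Rightarrow> nat \<Rightarrow> nat \<Rightarrow> nat" where
  "graph_dist T i j = (LEAST d. \<exists>w::nat\<Rightarrow>nat. w 0 = i \<and> w d = j \<and>
       (\<forall>k<d. (w k, w (Suc k)) \<in> edges T \<or> (w (Suc k), w k) \<in> edges T))"

definition diameter :: "nat \<Rightarrow> nat set set \<Rightarrow> nat" where
  "diameter n T = Max {graph_dist T i j | i j. i < n \<and> j < n}"

definition tet_dist :: "nat set set \<Rightarrow> nat set \<Rightarrow> nat set \<Rightarrow> nat" where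
  "tet_dist T x y = (LEAST d. \<exists>ts::nat\<Rightarrow>nat set. (\<forall>k\<le>d. ts k \<in> T) \<and>
       x \<subseteq> ts 0 \<and> y \<subseteq> ts d \<and> (\<forall>k<d. share_face (ts k) (ts (Suc k))))"

definition perp_xy :: "pos \<Rightarrow> nat \<Rightarrow> bvec" where
  "perp_xy p c = (\<lambda>i. vector [-((p i - p c) $ 2), (p i - p c) $ 1, 0])"
definition perp_xz :: "pos \<Rightarrow> nat \<Rightarrow> bvec" where
  "perp_xz p c = (\<lambda>i. vector [-((p i - p c) $ 3), 0, (p i - p c) $ 1])"
definition perp_yz :: "pos \<Rightarrow> nat \<Rightarrow> bvec" where
  "perp_yz p c = (\<lambda>i. vector [0, -((p i - p c) $ 3), (p i - p c) $ 2])"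

definition oriented_triangle :: "nat set set \<Rightarrow> nat \<times> nat \<times> nat \<Rightarrow> bool" where
  "oriented_triangle T s \<longleftrightarrow> (case s of (s1, s2, s3) \<Rightarrow>
     s1 \<noteq> s2 \<and> s1 \<noteq> s3 \<and> s2 \<noteq> s3 \<and> (\<exists>t\<in>T. {s1, s2, s3} \<subseteq> t))"

definition is_centering :: "pos \<Rightarrow> nat \<Rightarrow> bvec \<Rightarrow> nat \<times> nat \<times> nat \<Rightarrow> bvec \<Rightarrow> bool" where
  "is_centering p c q s qb \<longleftrightarrow> (case s of (s1, s2, s3) \<Rightarrow>
     (\<exists>c1 c2 c3::real. qb = (\<lambda>i. q i + c1 *\<^sub>R perp_xy p c i + c2 *\<^sub>R perp_xz p c i
                                    + c3 *\<^sub>R perp_yz p c i)) \<and>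
     (let N = cross3 (p s2 - p s1) (p s3 - p s1) in
        (qb s2 - qb s1) \<bullet> N = 0 \<and> (qb s3 - qb s1) \<bullet> N = 0) \<and>
     (\<exists>lam::real. qb s1 - qb s2 = lam *\<^sub>R (p s1 - p s2)))"

definition centering :: "pos \<Rightarrow> nat \<Rightarrow> bvec \<Rightarrow> nat \<times> nat \<times> nat \<Rightarrow> bvec" where
  "centering p c q s = (THE qb. is_centering p c q s qb)"

end

theory Submission
  imports Defs
begin

lemma recon: fixes w e1 e2 :: "real^3"
  shows "(norm (cross3 e1 e2))^2 *\<^sub>R w = ((cross3 w e2) \<bullet> cross3 e1 e2) *\<^sub>R e1 - ((cross3 w e1) \<bullet> cross3 e1 e2) *\<^sub>R e2 + ((cross3 w e1) \<bullet> e2) *\<^sub>R cross3 e1 e2"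
  unfolding power2_norm_eq_inner by (simp add: cross3_simps forall_3) 

lemma ccid: fixes u v w :: "real^3"
  shows "cross3 (cross3 u v) (cross3 u w) = (u \<bullet> cross3 v w) *\<^sub>R u"
  by (simp add: cross3_simps forall_3)

lemma vtp: fixes a b c :: "real^3"
  shows "cross3 (cross3 a b) c = (a \<bullet> c) *\<^sub>R b - (b \<bullet> c) *\<^sub>R a"
  by (simp add: cross3_simps forall_3)

lemma triple_cyc: fixes a b c :: "real^3"
  shows "a \<bullet> cross3 b c = b \<bullet> cross3 c a" "a \<bullet> cross3 b c = (cross3 a b) \<bullet> c"
  by (simp_all add: cross3_simps)

lemma norm_cross_le: fixes x y :: "real^3" shows "norm (cross3 x y) \<le> norm x * norm y"
proof -
  have "(norm (cross3 x y))^2 \<le> (norm x * norm y)^2" using norm_cross_dot[of x y]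
    by (metis le_add_same_cancel1 zero_le_power2)
  then show ?thesis by (simp add: power_mono_iff)
qed

lemma cramer: fixes x u v w :: "real^3"
  shows "(u \<bullet> cross3 v w) *\<^sub>R x = (x \<bullet> cross3 v w) *\<^sub>R u + (x \<bullet> cross3 w u) *\<^sub>R v + (x \<bullet> cross3 u v) *\<^sub>R w"
  by (simp add: cross3_simps forall_3)

lemma cross_sum3: fixes a b c d :: "real^3"
  shows "cross3 (c - a) (d - a) + cross3 (d - a) (b - a) + cross3 (b - a) (c - a) = cross3 (c - b) (d - b)"
  by (simp add: cross3_simps forall_3)

lemma rot_conv: fixes p :: pos
  shows "c1 *\<^sub>R perp_xy p c i + c2 *\<^sub>R perp_xz p c i + c3 *\<^sub>R perp_yz p c i
       = cross3 (vector [c3, -c2, c1]) (p i - p c)"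
  by (simp add: perp_xy_def perp_xz_def perp_yz_def cross3_simps forall_3)

lemma is_centering_form:
  assumes "is_centering p c q (s1,s2,s3) qb"
  shows "\<exists>w. qb = (\<lambda>i. q i + cross3 w (p i - p c))"
proof -
  from assms obtain c1 c2 c3 where "qb = (\<lambda>i. q i + c1 *\<^sub>R perp_xy p c i + c2 *\<^sub>R perp_xz p c i
                                    + c3 *\<^sub>R perp_yz p c i)" unfolding is_centering_def by auto
  then have "qb = (\<lambda>i. q i + cross3 (vector [c3, -c2, c1]) (p i - p c))"
    using rot_conv[of c1 p c _ c2 c3] by (simp add: add.assoc)
  then show ?thesis by blast
qed

lemma centering_unique:
  fixes p :: pos
  assumes N: "cross3 (p s2 - p s1) (p s3 - p s1) \<noteq> 0"
    and h1: "is_centering p c q (s1,s2,s3) qb1" and h2: "is_centering p c q (s1,s2,s3) qb2"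
  shows "qb1 = qb2"
proof -
  obtain w1 where w1: "qb1 = (\<lambda>i. q i + cross3 w1 (p i - p c))" using is_centering_form[OF h1] by blast
  obtain w2 where w2: "qb2 = (\<lambda>i. q i + cross3 w2 (p i - p c))" using is_centering_form[OF h2] by blast
  define e1 where "e1 = p s2 - p s1"
  define e2 where "e2 = p s3 - p s1"
  define NN where "NN = cross3 e1 e2"
  define eta where "eta = w1 - w2"
  from h1 obtain l1 where l1: "qb1 s1 - qb1 s2 = l1 *\<^sub>R (p s1 - p s2)"
    and pl1: "(qb1 s3 - qb1 s1) \<bullet> NN = 0" unfolding is_centering_def NN_def e1_def e2_def Let_def by auto
  from h2 obtain l2 where l2: "qb2 s1 - qb2 s2 = l2 *\<^sub>R (p s1 - p s2)"
    and pl2: "(qb2 s3 - qb2 s1) \<bullet> NN = 0" unfolding is_centering_def NN_def e1_def e2_def Let_def by auto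
  have d1: "qb1 s1 - qb1 s2 - (qb2 s1 - qb2 s2) = - cross3 eta e1"
    unfolding w1 w2 eta_def e1_def by (simp add: cross3_simps forall_3)
  have d2: "qb1 s3 - qb1 s1 - (qb2 s3 - qb2 s1) = cross3 eta e2"
    unfolding w1 w2 eta_def e2_def by (simp add: cross3_simps forall_3)
  have e1ne: "e1 \<noteq> 0" using N unfolding e1_def by auto
  have "- cross3 eta e1 = (l1 - l2) *\<^sub>R (- e1)" using d1 l1 l2 unfolding e1_def
    by (simp add: algebra_simps)
  then have "(- cross3 eta e1) \<bullet> e1 = (l1 - l2) * - (e1 \<bullet> e1)" by simp
  then have "(l1 - l2) * (e1 \<bullet> e1) = 0" by (simp add: dot_cross_self)
  then have "l1 = l2" using e1ne by simp
  then have f1: "cross3 eta e1 = 0" using \<open>- cross3 eta e1 = (l1 - l2) *\<^sub>R (- e1)\<close> by simp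
  have f2: "cross3 eta e2 \<bullet> NN = 0" using d2 pl1 pl2 by (metis inner_diff_left diff_zero)
  have "(norm NN)^2 *\<^sub>R eta = 0" using recon[of e1 e2 eta] f1 f2 unfolding NN_def by simp
  then have "eta = 0" using N unfolding NN_def e1_def e2_def by simp
  then show ?thesis using w1 w2 unfolding eta_def by simp
qed

lemma centering_exists:
  fixes p :: pos
  assumes N: "cross3 (p s2 - p s1) (p s3 - p s1) \<noteq> 0"
  shows "\<exists>qb. is_centering p c q (s1,s2,s3) qb"
proof -
  define e1 where "e1 = p s2 - p s1"
  define e2 where "e2 = p s3 - p s1"
  define NN where "NN = cross3 e1 e2"
  define d21 where "d21 = q s2 - q s1"
  define d31 where "d31 = q s3 - q s1"
  define k where "k = (d21 \<bullet> e1) / (e1 \<bullet> e1)"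
  define g where "g = d21 - k *\<^sub>R e1"
  define w0 where "w0 = (1 / (e1 \<bullet> e1)) *\<^sub>R cross3 g e1"
  define mu where "mu = (- (d31 \<bullet> NN) - w0 \<bullet> cross3 e2 NN) / (NN \<bullet> NN)"
  define w where "w = w0 + mu *\<^sub>R e1"
  define qb where "qb = (\<lambda>i. q i + cross3 w (p i - p c))"
  have e1ne: "e1 \<bullet> e1 \<noteq> 0" using N unfolding e1_def by auto
  have NNne: "NN \<bullet> NN \<noteq> 0" using N unfolding NN_def e1_def e2_def by auto
  have ge1: "g \<bullet> e1 = 0" unfolding g_def k_def using e1ne by (simp add: inner_diff_left)
  have we1: "cross3 w e1 = - g"
  proof -
    have "cross3 w e1 = (1 / (e1 \<bullet> e1)) *\<^sub>R cross3 (cross3 g e1) e1"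
      unfolding w_def w0_def by (simp add: cross_add_left cross_mult_left)
    also have "\<dots> = (1 / (e1 \<bullet> e1)) *\<^sub>R ((g \<bullet> e1) *\<^sub>R e1 - (e1 \<bullet> e1) *\<^sub>R g)" by (simp add: vtp)
    also have "\<dots> = - g" using ge1 e1ne by simp
    finally show ?thesis .
  qed
  have we2: "cross3 w e2 \<bullet> NN = - (d31 \<bullet> NN)"
  proof -
    have a1: "cross3 w e2 \<bullet> NN = w \<bullet> cross3 e2 NN" by (rule triple_cyc(2)[symmetric])
    have a2: "w \<bullet> cross3 e2 NN = w0 \<bullet> cross3 e2 NN + mu * (e1 \<bullet> cross3 e2 NN)" unfolding w_def
      by (simp add: inner_add_left)
    have a3: "e1 \<bullet> cross3 e2 NN = NN \<bullet> NN" unfolding NN_def by (rule triple_cyc(2))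
    have a4: "mu * (NN \<bullet> NN) = - (d31 \<bullet> NN) - w0 \<bullet> cross3 e2 NN" unfolding mu_def using NNne by simp
    show ?thesis using a1 a2 a3 a4 by simp
  qed
  have s21: "qb s2 - qb s1 = d21 + cross3 w e1" unfolding qb_def d21_def e1_def
    by (simp add: cross3_simps forall_3)
  have s31: "qb s3 - qb s1 = d31 + cross3 w e2" unfolding qb_def d31_def e2_def
    by (simp add: cross3_simps forall_3)
  have form: "\<exists>c1 c2 c3::real. qb = (\<lambda>i. q i + c1 *\<^sub>R perp_xy p c i + c2 *\<^sub>R perp_xz p c i
                                    + c3 *\<^sub>R perp_yz p c i)"
  proof (intro exI)
    have rc: "\<And>i. (w$3) *\<^sub>R perp_xy p c i + (- (w$2)) *\<^sub>R perp_xz p c i + (w$1) *\<^sub>R perp_yz p c i = cross3 w (p i - p c)"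
      by (simp add: perp_xy_def perp_xz_def perp_yz_def cross3_simps forall_3)
    show "qb = (\<lambda>i. q i + (w$3) *\<^sub>R perp_xy p c i + (- (w$2)) *\<^sub>R perp_xz p c i
                                    + (w$1) *\<^sub>R perp_yz p c i)"
      unfolding qb_def by (rule ext) (metis rc add.assoc)
  qed
  have p1: "(qb s2 - qb s1) \<bullet> NN = 0"
    unfolding s21 we1 g_def NN_def by (simp add: inner_diff_left dot_cross_self)
  have p2: "(qb s3 - qb s1) \<bullet> NN = 0"
    unfolding s31 using we2 by (simp add: inner_add_left)
  have p3: "qb s1 - qb s2 = k *\<^sub>R (p s1 - p s2)"
  proof -
    have "qb s1 - qb s2 = - (qb s2 - qb s1)" by simp
    also have "\<dots> = - (k *\<^sub>R e1)" unfolding s21 we1 g_def by simp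
    finally show ?thesis unfolding e1_def by (simp add: algebra_simps)
  qed
  have "is_centering p c q (s1,s2,s3) qb"
    unfolding is_centering_def Let_def using form p1 p2 p3
    unfolding NN_def e1_def e2_def by auto
  then show ?thesis by blast
qed

lemma centering_form:
  fixes p :: pos
  assumes N: "cross3 (p s2 - p s1) (p s3 - p s1) \<noteq> 0"
  shows "\<exists>w. centering p c q (s1,s2,s3) = (\<lambda>i. q i + cross3 w (p i - p c))"
proof -
  obtain qb where qb: "is_centering p c q (s1,s2,s3) qb" using centering_exists[OF N] by blast
  have "centering p c q (s1,s2,s3) = qb" unfolding centering_def
    using qb centering_unique[OF N] by (intro the_equality) auto
  then show ?thesis using is_centering_form[OF qb] by simp
qed

lemma face_ineq: fixes x y z ov :: "real^3"
  shows "norm (y - x) * \<bar>(y - x) \<bullet> cross3 (z - x) (ov - x)\<bar> \<le> norm (cross3 (y - x) (z - x)) * norm (cross3 (y - x) (ov - x))"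
proof -
  have "norm (cross3 (cross3 (y - x) (z - x)) (cross3 (y - x) (ov - x))) = \<bar>(y - x) \<bullet> cross3 (z - x) (ov - x)\<bar> * norm (y - x)"
    by (simp only: ccid norm_scaleR)
  then show ?thesis using norm_cross_le[of "cross3 (y - x) (z - x)" "cross3 (y - x) (ov - x)"] by (simp add: mult.commute)
qed

lemma trip3: fixes u v w :: "real^3" shows "(u + v + w) \<bullet> cross3 v w = u \<bullet> cross3 v w"
  "(u + v + w) \<bullet> cross3 w u = u \<bullet> cross3 v w" "(u + v + w) \<bullet> cross3 u v = u \<bullet> cross3 v w" by (simp_all add: cross3_simps)

lemma face_aux:
  fixes X Y l lmin r0 S Dt :: real
  assumes "l * \<bar>Dt\<bar> \<le> X * Y" "Y \<le> S" "r0 * S \<le> \<bar>Dt\<bar>" "lmin \<le> l" "Dt \<noteq> 0" "0 < r0" "0 < lmin" "0 \<le> X" "0 \<le> Y"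
  shows "lmin * r0 \<le> X"
proof -
  have "0 < l * \<bar>Dt\<bar>" using assms by simp
  have Y0: "0 < Y" proof (rule ccontr)
    assume "\<not> 0 < Y" then have "Y = 0" using assms(9) by simp
    then show False using \<open>0 < l * \<bar>Dt\<bar>\<close> assms(1) by simp
  qed
  have "lmin * r0 * Y \<le> lmin * r0 * S" using assms by (simp add: mult_left_mono)
  also have "\<dots> \<le> lmin * \<bar>Dt\<bar>" using assms(3,7) by (simp add: mult.assoc mult_left_mono)
  also have "\<dots> \<le> l * \<bar>Dt\<bar>" using assms by (simp add: mult_right_mono)
  also have "\<dots> \<le> X * Y" by fact
  finally show ?thesis using Y0 by simp
qed

definition Dt :: "real^3 \<Rightarrow> real^3 \<Rightarrow> real^3 \<Rightarrow> real^3 \<Rightarrow> real" where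
  "Dt a b c d = (b - a) \<bullet> cross3 (c - a) (d - a)"
definition Sg :: "real^3 \<Rightarrow> real^3 \<Rightarrow> real^3 \<Rightarrow> real^3 \<Rightarrow> real" where
  "Sg a b c d = norm (cross3 (b - a) (c - a)) + norm (cross3 (b - a) (d - a)) + norm (cross3 (c - a) (d - a)) + norm (cross3 (c - b) (d - b))"

lemma tet_r:
  assumes "aspect_ratio a b c d \<le> A0" "0 < lmin" "lmin \<le> dist a b" "Dt a b c d \<noteq> 0"
  shows "0 < A0" "lmin / A0 * Sg a b c d \<le> \<bar>Dt a b c d\<bar>"
proof -
  define L where "L = Max {dist a b, dist a c, dist a d, dist b c, dist b d, dist c d}"
  have L: "dist a b \<le> L" unfolding L_def by (rule Max_ge) auto
  have Sg0: "0 < Sg a b c d"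
  proof -
    have "cross3 (c - a) (d - a) \<noteq> 0" using assms(4) unfolding Dt_def by auto
    then have "0 < norm (cross3 (c - a) (d - a))" by simp
    then show ?thesis unfolding Sg_def by (smt (verit) norm_ge_zero)
  qed
  define r where "r = \<bar>Dt a b c d\<bar> / Sg a b c d"
  have ar: "aspect_ratio a b c d = L / r"
    unfolding aspect_ratio_def Let_def L_def tet_volume_def tri_area_def Dt_def Sg_def r_def
    by (simp add: field_simps)
  have L0: "0 < L" using L assms by linarith
  have r0: "0 < r" using Sg0 assms(4) unfolding r_def by simp
  have q0: "0 < L / r" using L0 r0 by (rule divide_pos_pos)
  show A0: "0 < A0" using q0 ar assms(1) by linarith
  have "L / r \<le> A0" using assms(1) ar by simp
  then have "L \<le> A0 * r" using r0 by (simp add: pos_divide_le_eq)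
  then have "lmin \<le> A0 * r" using L assms by linarith
  then have "lmin / A0 \<le> r" using A0 by (simp add: pos_divide_le_eq mult.commute)
  then show "lmin / A0 * Sg a b c d \<le> \<bar>Dt a b c d\<bar>" using Sg0 unfolding r_def by (simp add: le_divide_eq)
qed

lemma tet_faces:
  assumes "Dt a b c d \<noteq> 0" "r0 * Sg a b c d \<le> \<bar>Dt a b c d\<bar>" "0 < r0" "0 < lmin"
    and "lmin \<le> norm (b - a)" "lmin \<le> norm (c - a)" "lmin \<le> norm (c - b)"
  shows "lmin * r0 \<le> norm (cross3 (b - a) (c - a))" "lmin * r0 \<le> norm (cross3 (b - a) (d - a))"
        "lmin * r0 \<le> norm (cross3 (c - a) (d - a))" "lmin * r0 \<le> norm (cross3 (c - b) (d - b))"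
proof -
  let ?X1 = "norm (cross3 (b - a) (c - a))" and ?X2 = "norm (cross3 (b - a) (d - a))"
    and ?X3 = "norm (cross3 (c - a) (d - a))" and ?X4 = "norm (cross3 (c - b) (d - b))"
  have S: "?X1 \<le> Sg a b c d" "?X2 \<le> Sg a b c d" "?X3 \<le> Sg a b c d" "?X4 \<le> Sg a b c d"
    unfolding Sg_def by (smt (verit) norm_ge_zero)+
  have i1: "norm (b - a) * \<bar>Dt a b c d\<bar> \<le> ?X1 * ?X2" using face_ineq[of b a c d] unfolding Dt_def .
  show "lmin * r0 \<le> ?X1" by (rule face_aux[OF i1 S(2) assms(2) assms(5) assms(1) assms(3) assms(4)]) auto
  have "(b - a) \<bullet> cross3 (d - a) (c - a) = - Dt a b c d" unfolding Dt_def by (simp add: cross3_simps)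
  then have i2: "norm (b - a) * \<bar>Dt a b c d\<bar> \<le> ?X2 * ?X1" using face_ineq[of b a d c] by simp
  show "lmin * r0 \<le> ?X2" by (rule face_aux[OF i2 S(1) assms(2) assms(5) assms(1) assms(3) assms(4)]) auto
  have "(c - a) \<bullet> cross3 (d - a) (b - a) = Dt a b c d" unfolding Dt_def by (simp add: cross3_simps)
  moreover have "norm (cross3 (c - a) (b - a)) = ?X1" by (metis cross_skew norm_minus_cancel)
  ultimately have i3: "norm (c - a) * \<bar>Dt a b c d\<bar> \<le> ?X3 * ?X1" using face_ineq[of c a d b] by simp
  show "lmin * r0 \<le> ?X3" by (rule face_aux[OF i3 S(1) assms(2) assms(6) assms(1) assms(3) assms(4)]) auto
  have "(c - b) \<bullet> cross3 (d - b) (a - b) = - Dt a b c d" unfolding Dt_def by (simp add: cross3_simps)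
  moreover have "cross3 (c - b) (a - b) = cross3 (b - a) (c - a)" by (simp add: cross3_simps forall_3)
  ultimately have i4: "norm (c - b) * \<bar>Dt a b c d\<bar> \<le> ?X4 * ?X1" using face_ineq[of c b d a] by simp
  show "lmin * r0 \<le> ?X4" by (rule face_aux[OF i4 S(1) assms(2) assms(7) assms(1) assms(3) assms(4)]) auto
qed

lemma bary_nonneg:
  fixes e Dt rho X :: real
  assumes "\<bar>e\<bar> \<le> rho * X" "rho * X \<le> \<bar>Dt\<bar> / 4" "Dt \<noteq> 0"
  shows "0 \<le> 1/4 + e / Dt" "0 \<le> 1/4 - e / Dt"
proof -
  have "\<bar>e / Dt\<bar> \<le> 1/4" using assms by (simp add: abs_divide divide_le_eq)
  then show "0 \<le> 1/4 + e / Dt" "0 \<le> 1/4 - e / Dt" by linarith+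
qed

lemma ball_in_hull:
  fixes a b c d :: "real^3"
  assumes D: "Dt a b c d \<noteq> 0" and rho: "0 < rho" "rho * Sg a b c d \<le> \<bar>Dt a b c d\<bar> / 4"
    and dist: "a \<noteq> b" "a \<noteq> c" "a \<noteq> d" "b \<noteq> c" "b \<noteq> d" "c \<noteq> d"
  shows "ball ((1/4) *\<^sub>R (a + b + c + d)) rho \<subseteq> convex hull {a, b, c, d}"
proof
  fix x assume xb: "x \<in> ball ((1/4) *\<^sub>R (a + b + c + d)) rho"
  define g where "g = (1/4) *\<^sub>R (a + b + c + d)"
  define u where "u = b - a"
  define v where "v = c - a"
  define w where "w = d - a"
  define y where "y = x - a"
  define DD where "DD = Dt a b c d"
  have DDu: "DD = u \<bullet> cross3 v w" unfolding DD_def Dt_def u_def v_def w_def ..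
  have xg: "norm (x - g) < rho" using xb unfolding g_def by (simp add: dist_norm norm_minus_commute)
  define B where "B = (y \<bullet> cross3 v w) / DD"
  define C where "C = (y \<bullet> cross3 w u) / DD"
  define E where "E = (y \<bullet> cross3 u v) / DD"
  define A where "A = 1 - B - C - E"
  have S: "norm (cross3 v w) \<le> Sg a b c d" "norm (cross3 w u) \<le> Sg a b c d" "norm (cross3 u v) \<le> Sg a b c d"
      "norm (cross3 (c - b) (d - b)) \<le> Sg a b c d"
    unfolding Sg_def u_def v_def w_def
    by (smt (verit) norm_ge_zero cross_skew norm_minus_cancel)+
  have bnd: "\<bar>(x - g) \<bullet> z\<bar> \<le> rho * Sg a b c d" if "norm z \<le> Sg a b c d" for z
  proof -
    have "\<bar>(x - g) \<bullet> z\<bar> \<le> norm (x - g) * norm z" by (rule Cauchy_Schwarz_ineq2)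
    also have "\<dots> \<le> rho * Sg a b c d" using xg that rho(1) by (intro mult_mono) auto
    finally show ?thesis .
  qed
  have ga: "g - a = (1/4) *\<^sub>R (u + v + w)" unfolding g_def u_def v_def w_def by (simp add: vec_eq_iff field_simps)
  have yy: "y = (x - g) + (g - a)" unfolding y_def by simp
  have g1: "(g - a) \<bullet> cross3 v w = DD / 4" unfolding ga DDu using trip3[of u v w] by simp
  have g2: "(g - a) \<bullet> cross3 w u = DD / 4" unfolding ga DDu using trip3[of u v w] by simp
  have g3: "(g - a) \<bullet> cross3 u v = DD / 4" unfolding ga DDu using trip3[of u v w] by simp
  have c4: "cross3 v w + cross3 w u + cross3 u v = cross3 (c - b) (d - b)"
    unfolding u_def v_def w_def by (rule cross_sum3)
  have "y \<bullet> cross3 v w = (x - g) \<bullet> cross3 v w + (g - a) \<bullet> cross3 v w" unfolding yy by (rule inner_add_left)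
  then have "y \<bullet> cross3 v w = (x - g) \<bullet> cross3 v w + DD / 4" using g1 by linarith
  then have B': "B = 1/4 + ((x - g) \<bullet> cross3 v w) / DD" unfolding B_def using D unfolding DD_def
    by (simp add: add_divide_distrib)
  have "y \<bullet> cross3 w u = (x - g) \<bullet> cross3 w u + (g - a) \<bullet> cross3 w u" unfolding yy by (rule inner_add_left)
  then have "y \<bullet> cross3 w u = (x - g) \<bullet> cross3 w u + DD / 4" using g2 by linarith
  then have C': "C = 1/4 + ((x - g) \<bullet> cross3 w u) / DD" unfolding C_def using D unfolding DD_def
    by (simp add: add_divide_distrib)
  have "y \<bullet> cross3 u v = (x - g) \<bullet> cross3 u v + (g - a) \<bullet> cross3 u v" unfolding yy by (rule inner_add_left)
  then have "y \<bullet> cross3 u v = (x - g) \<bullet> cross3 u v + DD / 4" using g3 by linarith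
  then have E': "E = 1/4 + ((x - g) \<bullet> cross3 u v) / DD" unfolding E_def using D unfolding DD_def
    by (simp add: add_divide_distrib)
  have A': "A = 1/4 - ((x - g) \<bullet> cross3 (c - b) (d - b)) / DD"
  proof -
    have "A = 1 - (B + C + E)" unfolding A_def by simp
    also have "B + C + E = 3/4 + ((x - g) \<bullet> (cross3 v w + cross3 w u + cross3 u v)) / DD"
      unfolding B' C' E' by (simp add: inner_add_right add_divide_distrib)
    finally show ?thesis unfolding c4 by simp
  qed
  have rhoS: "rho * Sg a b c d \<le> \<bar>DD\<bar> / 4" using rho unfolding DD_def by simp
  have DD0: "DD \<noteq> 0" using D unfolding DD_def .
  have nB: "0 \<le> B" unfolding B' by (rule bary_nonneg(1)[OF bnd[OF S(1)] rhoS DD0])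
  have nC: "0 \<le> C" unfolding C' by (rule bary_nonneg(1)[OF bnd[OF S(2)] rhoS DD0])
  have nE: "0 \<le> E" unfolding E' by (rule bary_nonneg(1)[OF bnd[OF S(3)] rhoS DD0])
  have nA: "0 \<le> A" unfolding A' by (rule bary_nonneg(2)[OF bnd[OF S(4)] rhoS DD0])
  have cr: "DD *\<^sub>R y = (y \<bullet> cross3 v w) *\<^sub>R u + (y \<bullet> cross3 w u) *\<^sub>R v + (y \<bullet> cross3 u v) *\<^sub>R w"
    unfolding DDu by (rule cramer)
  have "y = B *\<^sub>R u + C *\<^sub>R v + E *\<^sub>R w"
  proof -
    have "y = (1 / DD) *\<^sub>R (DD *\<^sub>R y)" using DD0 by simp
    also have "\<dots> = B *\<^sub>R u + C *\<^sub>R v + E *\<^sub>R w" unfolding cr B_def C_def E_def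
      by (simp add: scaleR_add_right divide_inverse_commute)
    finally show ?thesis .
  qed
  then have xe: "x = A *\<^sub>R a + B *\<^sub>R b + C *\<^sub>R c + E *\<^sub>R d"
    unfolding y_def A_def u_def v_def w_def by (simp add: algebra_simps)
  define U where "U = (\<lambda>z. if z = a then A else if z = b then B else if z = c then C else E)"
  have "x \<in> {y. \<exists>u. (\<forall>x\<in>{a,b,c,d}. 0 \<le> u x) \<and> sum u {a,b,c,d} = 1 \<and> (\<Sum>x\<in>{a,b,c,d}. u x *\<^sub>R x) = y}"
  proof (intro CollectI exI conjI)
    show "\<forall>z\<in>{a,b,c,d}. 0 \<le> U z" using nA nB nC nE unfolding U_def by auto
    show "sum U {a,b,c,d} = 1" using dist unfolding U_def A_def by simp
    show "(\<Sum>z\<in>{a,b,c,d}. U z *\<^sub>R z) = x" using dist unfolding U_def xe by (simp add: algebra_simps)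
  qed
  then show "x \<in> convex hull {a, b, c, d}" by (subst convex_hull_finite) auto
qed

lemma Dt_nonzero:
  fixes a b c d :: "real^3"
  assumes indep: "\<not> affine_dependent {a, b, c, d}"
    and dist: "a \<noteq> b" "a \<noteq> c" "a \<noteq> d" "b \<noteq> c" "b \<noteq> d" "c \<noteq> d"
  shows "Dt a b c d \<noteq> 0"
proof
  assume D0: "Dt a b c d = 0"
  define u where "u = b - a"
  define v where "v = c - a"
  define w where "w = d - a"
  have D0': "u \<bullet> cross3 v w = 0" using D0 unfolding Dt_def u_def v_def w_def .
  have "\<exists>al be ga. (al \<noteq> 0 \<or> be \<noteq> 0 \<or> ga \<noteq> 0) \<and> al *\<^sub>R u + be *\<^sub>R v + ga *\<^sub>R w = 0"
  proof (cases "cross3 v w = 0")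
    case False
    have "(norm (cross3 v w))^2 *\<^sub>R u = ((cross3 u w) \<bullet> cross3 v w) *\<^sub>R v - ((cross3 u v) \<bullet> cross3 v w) *\<^sub>R w + ((cross3 u v) \<bullet> w) *\<^sub>R cross3 v w"
      by (rule recon)
    moreover have "(cross3 u v) \<bullet> w = 0" using D0' by (simp add: triple_cyc)
    ultimately have "(norm (cross3 v w))^2 *\<^sub>R u + (- ((cross3 u w) \<bullet> cross3 v w)) *\<^sub>R v + ((cross3 u v) \<bullet> cross3 v w) *\<^sub>R w = 0"
      by (simp add: algebra_simps)
    moreover have "(norm (cross3 v w))^2 \<noteq> 0" using False by simp
    ultimately show ?thesis by blast
  next
    case True
    have "cross3 (cross3 w v) w = (w \<bullet> w) *\<^sub>R v - (v \<bullet> w) *\<^sub>R w" by (rule vtp)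
    moreover have "cross3 w v = 0" using True by (metis cross_skew neg_equal_0_iff_equal)
    ultimately have "0 *\<^sub>R u + (w \<bullet> w) *\<^sub>R v + (- (v \<bullet> w)) *\<^sub>R w = 0" by simp
    moreover have "w \<bullet> w \<noteq> 0" using dist unfolding w_def by simp
    ultimately show ?thesis by blast
  qed
  then obtain al be ga where nz: "al \<noteq> 0 \<or> be \<noteq> 0 \<or> ga \<noteq> 0" and comb: "al *\<^sub>R u + be *\<^sub>R v + ga *\<^sub>R w = 0"
    by blast
  define U where "U = (\<lambda>z. if z = b then al else if z = c then be else if z = d then ga else - (al + be + ga))"
  have "\<exists>U. sum U {a,b,c,d} = 0 \<and> (\<exists>z\<in>{a,b,c,d}. U z \<noteq> 0) \<and> (\<Sum>z\<in>{a,b,c,d}. U z *\<^sub>R z) = 0"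
  proof (intro exI conjI)
    show "sum U {a,b,c,d} = 0" using dist unfolding U_def by simp
    show "\<exists>z\<in>{a,b,c,d}. U z \<noteq> 0" using nz dist unfolding U_def by auto
    show "(\<Sum>z\<in>{a,b,c,d}. U z *\<^sub>R z) = 0" using dist comb unfolding U_def u_def v_def w_def
      by (simp add: algebra_simps)
  qed
  then have "affine_dependent {a, b, c, d}" by (subst affine_dependent_explicit_finite) auto
  then show False using indep by simp
qed

lemma card4_split:
  assumes "card t = 4"
  shows "\<exists>a b c d. t = {a,b,c,d} \<and> a \<noteq> b \<and> a \<noteq> c \<and> a \<noteq> d \<and> b \<noteq> c \<and> b \<noteq> d \<and> c \<noteq> d"
proof -
  have "card t = Suc (Suc (Suc (Suc 0)))" using assms by simp
  then show ?thesis by (auto simp: card_Suc_eq)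
qed

lemma card4_distinct:
  assumes "card {a,b,c,d} = 4"
  shows "a \<noteq> b \<and> a \<noteq> c \<and> a \<noteq> d \<and> b \<noteq> c \<and> b \<noteq> d \<and> c \<noteq> d"
proof -
  have "card {a,b,c,d} \<le> 3" if "a = b \<or> a = c \<or> a = d \<or> b = c \<or> b = d \<or> c = d"
  proof -
    have "\<exists>x y z. {a,b,c,d} = {x,y,z}" using that by auto
    then obtain x y z where "{a,b,c,d} = {x,y,z}" by blast
    then show ?thesis by (simp add: card_insert_if)
  qed
  then show ?thesis using assms by force
qed

definition tri_ok :: "real \<Rightarrow> real^3 \<Rightarrow> real^3 \<Rightarrow> real^3 \<Rightarrow> bool" where
  "tri_ok al x y z \<longleftrightarrow> al \<le> norm (cross3 (y - x) (z - x))"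

lemma tri_ok_swap: "tri_ok al x y z \<Longrightarrow> tri_ok al x z y"
  unfolding tri_ok_def by (metis cross_skew norm_minus_cancel)

lemma tri_ok_rot: "tri_ok al x y z \<Longrightarrow> tri_ok al y z x"
proof -
  have "cross3 (z - y) (x - y) = cross3 (y - x) (z - x)" by (simp add: cross3_simps forall_3)
  then show "tri_ok al x y z \<Longrightarrow> tri_ok al y z x" unfolding tri_ok_def by simp
qed

lemma tri_ok_all:
  assumes "tri_ok al a b c" "tri_ok al a b d" "tri_ok al a c d" "tri_ok al b c d"
    and "x \<in> {a,b,c,d}" "y \<in> {a,b,c,d}" "z \<in> {a,b,c,d}" "x \<noteq> y" "x \<noteq> z" "y \<noteq> z"
  shows "tri_ok al x y z"
  using assms by (auto intro: tri_ok_swap tri_ok_rot tri_ok_rot[OF tri_ok_swap] tri_ok_swap[OF tri_ok_rot]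
      tri_ok_rot[OF tri_ok_rot] tri_ok_swap[OF tri_ok_rot[OF tri_ok_rot]])

lemma edge_len:
  assumes es: "edge_simple A lmin lmax gmin gmax n p T \<gamma>"
    and t: "t \<in> T" "x \<in> t" "y \<in> t" "x \<noteq> y"
  shows "lmin \<le> dist (p x) (p y) \<and> dist (p x) (p y) \<le> lmax"
proof -
  have "(min x y, max x y) \<in> edges T" unfolding edges_def using t by (auto simp: min_def max_def)
  then have "lmin \<le> dist (p (min x y)) (p (max x y)) \<and> dist (p (min x y)) (p (max x y)) \<le> lmax"
    using es unfolding edge_simple_def by fast
  then show ?thesis by (cases "x \<le> y") (auto simp: min_def max_def dist_commute)
qed

definition centroid :: "pos \<Rightarrow> nat set \<Rightarrow> real^3" where
  "centroid p t = (1/4) *\<^sub>R (\<Sum>x\<in>t. p x)"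

lemma tet_geom_T:
  assumes es: "edge_simple A lmin lmax gmin gmax n p T \<gamma>" and inj: "inj_on p {..<n}"
    and lmin: "0 < lmin" and t: "t \<in> T"
  shows "0 < A"
    "\<And>x y z. x \<in> t \<Longrightarrow> y \<in> t \<Longrightarrow> z \<in> t \<Longrightarrow> x \<noteq> y \<Longrightarrow> x \<noteq> z \<Longrightarrow> y \<noteq> z \<Longrightarrow>
       lmin * (lmin / A) \<le> norm (cross3 (p y - p x) (p z - p x))"
    "ball (centroid p t) (lmin / A / 4) \<subseteq> convex hull (p ` t)"
proof -
  have sc: "simplicial_complex n p T" using es unfolding edge_simple_def by simp
  have tn: "t \<subseteq> {..<n}" and c4: "card t = 4" and ind: "\<not> affine_dependent (p ` t)"
    using sc t unfolding simplicial_complex_def by auto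
  have ar: "tet_aspect_ratio p t \<le> A" using es t unfolding edge_simple_def by simp
  obtain a0 b0 c0 d0 where "t = {a0,b0,c0,d0}" using card4_split[OF c4] by blast
  then have ex: "\<exists>r. \<exists>a b c d. t = {a,b,c,d} \<and> r = aspect_ratio (p a) (p b) (p c) (p d)" by blast
  obtain a b c d where tabcd: "t = {a,b,c,d}" and arr: "tet_aspect_ratio p t = aspect_ratio (p a) (p b) (p c) (p d)"
    using someI_ex[OF ex] unfolding tet_aspect_ratio_def by blast
  have dst: "a \<noteq> b \<and> a \<noteq> c \<and> a \<noteq> d \<and> b \<noteq> c \<and> b \<noteq> d \<and> c \<noteq> d" using c4 tabcd card4_distinct by simp
  have inj_t: "inj_on p t" using inj tn by (rule inj_on_subset)
  have pd: "p a \<noteq> p b" "p a \<noteq> p c" "p a \<noteq> p d" "p b \<noteq> p c" "p b \<noteq> p d" "p c \<noteq> p d"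
    using dst inj_t unfolding tabcd inj_on_def by blast+
  have pt: "p ` t = {p a, p b, p c, p d}" using tabcd by simp
  have D: "Dt (p a) (p b) (p c) (p d) \<noteq> 0" using Dt_nonzero[OF _ pd] ind pt by simp
  have el: "\<And>x y. x \<in> t \<Longrightarrow> y \<in> t \<Longrightarrow> x \<noteq> y \<Longrightarrow> lmin \<le> norm (p y - p x)"
    using edge_len[OF es] t by (metis dist_norm dist_commute)
  have lab: "lmin \<le> dist (p a) (p b)" using edge_len[OF es t, of a b] dst tabcd by simp
  have A0: "0 < A" and rS: "lmin / A * Sg (p a) (p b) (p c) (p d) \<le> \<bar>Dt (p a) (p b) (p c) (p d)\<bar>"
    using tet_r[OF _ lmin lab D, of A] ar arr by auto
  then show "0 < A" by simp
  have r0: "0 < lmin / A" using A0 lmin by simp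
  have F: "lmin * (lmin / A) \<le> norm (cross3 (p b - p a) (p c - p a))" "lmin * (lmin / A) \<le> norm (cross3 (p b - p a) (p d - p a))"
        "lmin * (lmin / A) \<le> norm (cross3 (p c - p a) (p d - p a))" "lmin * (lmin / A) \<le> norm (cross3 (p c - p b) (p d - p b))"
    using tet_faces[OF D rS r0 lmin] el tabcd dst by auto
  show "lmin * (lmin / A) \<le> norm (cross3 (p y - p x) (p z - p x))"
    if "x \<in> t" "y \<in> t" "z \<in> t" "x \<noteq> y" "x \<noteq> z" "y \<noteq> z" for x y z
  proof -
    have "tri_ok (lmin * (lmin / A)) (p x) (p y) (p z)"
      by (rule tri_ok_all[of _ "p a" "p b" "p c" "p d"]) (use F that pt inj_t in \<open>auto simp: tri_ok_def inj_on_def\<close>)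
    then show ?thesis unfolding tri_ok_def .
  qed
  have cen: "centroid p t = (1/4) *\<^sub>R (p a + p b + p c + p d)"
    unfolding centroid_def tabcd using dst by (simp add: add.assoc)
  have "ball ((1/4) *\<^sub>R (p a + p b + p c + p d)) (lmin / A / 4) \<subseteq> convex hull {p a, p b, p c, p d}"
    by (rule ball_in_hull[OF D]) (use r0 rS pd in auto)
  then show "ball (centroid p t) (lmin / A / 4) \<subseteq> convex hull (p ` t)" using cen pt by simp
qed

lemma hull_inter_interior:
  assumes sc: "simplicial_complex n p T" and t: "t1 \<in> T" "t2 \<in> T" "t1 \<noteq> t2"
  shows "interior (convex hull (p ` t1) \<inter> convex hull (p ` t2)) = {}"
proof -
  have c1: "card t1 = 4" and c2: "card t2 = 4" and eq: "convex hull (p ` t1) \<inter> convex hull (p ` t2) = convex hull (p ` (t1 \<inter> t2))"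
    using sc t unfolding simplicial_complex_def by auto
  have f1: "finite t1" using c1 by (metis card.infinite zero_neq_numeral)
  have f2: "finite t2" using c2 by (metis card.infinite zero_neq_numeral)
  have "card (t1 \<inter> t2) \<le> 3"
  proof (rule ccontr)
    assume "\<not> card (t1 \<inter> t2) \<le> 3"
    moreover have "card (t1 \<inter> t2) \<le> 4" using c1 f1 by (metis card_mono inf_le1)
    ultimately have "card (t1 \<inter> t2) = 4" by simp
    then have "t1 \<inter> t2 = t1" "t1 \<inter> t2 = t2" using c1 c2 f1 f2
      by (metis card_subset_eq inf_le1, metis card_subset_eq inf_le2)
    then show False using t by blast
  qed
  then have "card (p ` (t1 \<inter> t2)) \<le> DIM(real^3)" using card_image_le[of "t1 \<inter> t2" p] f1 by simp
  then show ?thesis unfolding eq by (intro empty_interior_convex_hull) (use f1 in auto)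
qed

lemma ball_sep:
  fixes g1 g2 :: "real^3"
  assumes "ball g1 rho \<subseteq> H1" "ball g2 rho \<subseteq> H2" "interior (H1 \<inter> H2) = {}"
  shows "rho \<le> dist g1 g2"
proof (rule ccontr)
  assume "\<not> rho \<le> dist g1 g2"
  then have lt: "dist g1 g2 < rho" by simp
  have "ball g1 (rho - dist g1 g2) \<subseteq> H1 \<inter> H2"
  proof
    fix x assume "x \<in> ball g1 (rho - dist g1 g2)"
    then have "dist g1 x < rho - dist g1 g2" by simp
    moreover have "dist g2 x \<le> dist g1 g2 + dist g1 x" by (metis dist_commute dist_triangle)
    moreover have "0 \<le> dist g1 g2" by simp
    ultimately have "dist g1 x < rho" "dist g2 x < rho" using lt by linarith+
    then have "x \<in> ball g1 rho" "x \<in> ball g2 rho" by auto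
    then show "x \<in> H1 \<inter> H2" using assms by auto
  qed
  then have "ball g1 (rho - dist g1 g2) \<subseteq> interior (H1 \<inter> H2)" by (intro interior_maximal) auto
  moreover have "g1 \<in> ball g1 (rho - dist g1 g2)" using lt by simp
  ultimately have "g1 \<in> interior (H1 \<inter> H2)" by blast
  then show False using assms(3) by blast
qed

lemma floor_eq_close: fixes u v :: real assumes "\<lfloor>u\<rfloor> = \<lfloor>v\<rfloor>" shows "\<bar>u - v\<bar> < 1"
proof -
  have "of_int \<lfloor>u\<rfloor> \<le> u" "u < of_int \<lfloor>u\<rfloor> + 1" "of_int \<lfloor>v\<rfloor> \<le> v" "v < of_int \<lfloor>v\<rfloor> + 1"
    by linarith+
  then show ?thesis using assms by linarith
qed

lemma grid_count:
  fixes X :: "(real^3) set" and z :: "real^3"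
  assumes R: "\<forall>x\<in>X. dist z x \<le> R" and sep: "\<forall>x\<in>X. \<forall>y\<in>X. x \<noteq> y \<longrightarrow> h \<le> dist x y" and h: "0 < h"
  shows "card X \<le> (nat (2 * \<lceil>R / (h/4)\<rceil> + 1))^3"
proof -
  define s where "s = h / 4"
  have s0: "0 < s" using h unfolding s_def by simp
  define m where "m = \<lceil>R / s\<rceil>"
  define f where "f = (\<lambda>x::real^3. (\<lfloor>(x$1 - z$1) / s\<rfloor>, \<lfloor>(x$2 - z$2) / s\<rfloor>, \<lfloor>(x$3 - z$3) / s\<rfloor>))"
  have comp: "\<lfloor>(x$i - z$i) / s\<rfloor> \<in> {-m..m}" if "x \<in> X" for x i
  proof -
    have "\<bar>x$i - z$i\<bar> \<le> norm (x - z)" using component_le_norm_cart[of "x - z" i] by simp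
    also have "\<dots> \<le> R" using R that by (simp add: dist_norm norm_minus_commute)
    finally have a: "\<bar>x$i - z$i\<bar> \<le> R" .
    have "(x$i - z$i) / s \<le> R / s" using a s0 by (simp add: divide_right_mono)
    moreover have "- (R / s) \<le> (x$i - z$i) / s"
    proof -
      have "-R \<le> x$i - z$i" using a by linarith
      then have "(-R) / s \<le> (x$i - z$i) / s" using s0 by (intro divide_right_mono) auto
      then show ?thesis by simp
    qed
    moreover have "R / s \<le> of_int m" unfolding m_def by simp
    ultimately have "of_int (-m) \<le> (x$i - z$i) / s" "(x$i - z$i) / s < of_int m + 1" by linarith+
    then show ?thesis by (simp add: le_floor_iff floor_le_iff)
  qed
  have img: "f ` X \<subseteq> {-m..m} \<times> {-m..m} \<times> {-m..m}" unfolding f_def using comp by auto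
  have inj: "inj_on f X"
  proof (rule inj_onI, rule ccontr)
    fix x y assume xy: "x \<in> X" "y \<in> X" "f x = f y" "x \<noteq> y"
    have cl: "\<bar>x$i - y$i\<bar> < s" if "i = 1 \<or> i = 2 \<or> i = 3" for i
    proof -
      have "\<lfloor>(x$i - z$i) / s\<rfloor> = \<lfloor>(y$i - z$i) / s\<rfloor>" using xy(3) that unfolding f_def by auto
      then have "\<bar>(x$i - z$i) / s - (y$i - z$i) / s\<bar> < 1" by (rule floor_eq_close)
      then have "\<bar>(x$i - y$i) / s\<bar> < 1" by (simp add: diff_divide_distrib)
      then show ?thesis using s0 by (simp add: abs_divide)
    qed
    have "norm (x - y) \<le> (\<Sum>i\<in>UNIV. \<bar>(x - y)$i\<bar>)" by (rule norm_le_l1_cart)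
    also have "\<dots> = \<bar>x$1 - y$1\<bar> + \<bar>x$2 - y$2\<bar> + \<bar>x$3 - y$3\<bar>" by (simp add: sum_3)
    also have "\<dots> < 3 * s" using cl[of 1] cl[of 2] cl[of 3] by simp
    also have "\<dots> < h" unfolding s_def using h by simp
    finally have "dist x y < h" by (simp add: dist_norm)
    then show False using sep xy by force
  qed
  have "card X = card (f ` X)" using inj by (simp add: card_image)
  also have "\<dots> \<le> card ({-m..m} \<times> {-m..m} \<times> {-m..m})" by (rule card_mono[OF _ img]) simp
  also have "\<dots> = (nat (2 * m + 1))^3" by (simp add: card_cartesian_product power3_eq_cube)
  finally show ?thesis unfolding m_def s_def .
qed

definition star_bound :: "real \<Rightarrow> real \<Rightarrow> real \<Rightarrow> nat" where
  "star_bound A lmin lmax = (nat (2 * \<lceil>lmax / ((lmin / A / 4) / 4)\<rceil> + 1))^3"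

lemma star_card:
  assumes es: "edge_simple A lmin lmax gmin gmax n p T \<gamma>" and inj: "inj_on p {..<n}"
    and lmin: "0 < lmin"
  shows "card {t\<in>T. v \<in> t} \<le> star_bound A lmin lmax"
proof (cases "{t\<in>T. v \<in> t} = {}")
  case True then show ?thesis by (metis card.empty zero_le)
next
  case False
  then obtain t0 where "t0 \<in> T" by auto
  have A0: "0 < A" by (rule tet_geom_T(1)[OF es inj lmin \<open>t0 \<in> T\<close>])
  define rho where "rho = lmin / A / 4"
  have rho0: "0 < rho" using A0 lmin unfolding rho_def by simp
  have sc: "simplicial_complex n p T" using es unfolding edge_simple_def by simp
  let ?S = "{t\<in>T. v \<in> t}"
  have sep: "rho \<le> dist (centroid p t1) (centroid p t2)" if "t1 \<in> ?S" "t2 \<in> ?S" "t1 \<noteq> t2" for t1 t2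
    using ball_sep[OF tet_geom_T(3)[OF es inj lmin, of t1] tet_geom_T(3)[OF es inj lmin, of t2]
        hull_inter_interior[OF sc, of t1 t2]] that unfolding rho_def by auto
  have injc: "inj_on (centroid p) ?S"
  proof (rule inj_onI, rule ccontr)
    fix x y assume "x \<in> ?S" "y \<in> ?S" "centroid p x = centroid p y" "x \<noteq> y"
    then show False using sep[of x y] rho0 by simp
  qed
  have near: "dist (p v) (centroid p t) \<le> lmax" if "t \<in> ?S" for t
  proof -
    have tT: "t \<in> T" and vt: "v \<in> t" using that by auto
    have c4: "card t = 4" using sc tT unfolding simplicial_complex_def by auto
    have ft: "finite t" using c4 by (metis card.infinite zero_neq_numeral)
    have each: "norm (p x - p v) \<le> lmax" if "x \<in> t" for x
    proof (cases "x = v")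
      case True
      have "dist (p v) (p t0) \<le> lmax" if "t0 \<in> t" "t0 \<noteq> v" for t0
        using edge_len[OF es tT vt that(1) that(2)[symmetric]] by simp
      moreover have "\<not> t \<subseteq> {v}"
      proof
        assume "t \<subseteq> {v}" then have "card t \<le> 1" using card_mono[of "{v}" t] by simp
        then show False using c4 by simp
      qed
      then obtain w where "w \<in> t" "w \<noteq> v" by blast
      ultimately have "0 \<le> lmax" by (metis dist_commute zero_le_dist order_trans)
      then show ?thesis using True by simp
    next
      case False
      then show ?thesis using edge_len[OF es tT that vt False] by (simp add: dist_norm)
    qed
    have "centroid p t - p v = (1/4) *\<^sub>R (\<Sum>x\<in>t. (p x - p v))"
      unfolding centroid_def using c4 by (simp add: sum_subtractf scaleR_diff_right)
    then have "norm (centroid p t - p v) = (1/4) * norm (\<Sum>x\<in>t. (p x - p v))" by simp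
    also have "\<dots> \<le> (1/4) * (\<Sum>x\<in>t. norm (p x - p v))" by (intro mult_left_mono norm_sum) auto
    also have "\<dots> \<le> (1/4) * (\<Sum>x\<in>t. lmax)" by (intro mult_left_mono sum_mono each) auto
    also have "\<dots> = lmax" using c4 by simp
    finally show ?thesis by (simp add: dist_norm norm_minus_commute)
  qed
  have "card ?S = card (centroid p ` ?S)" using injc by (simp add: card_image)
  also have "\<dots> \<le> (nat (2 * \<lceil>lmax / (rho/4)\<rceil> + 1))^3"
    by (rule grid_count[of _ "p v" lmax rho]) (use near sep rho0 injc in \<open>auto simp: inj_on_def\<close>)
  finally show ?thesis unfolding star_bound_def rho_def .
qed

lemma bip_bvec:
  fixes p :: pos and m :: bvec
  assumes ij: "i < n" "j < n" "i \<noteq> j"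
  shows "bip n (bvec_e p i j) m = (1 / norm (p i - p j)) * ((p i - p j) \<bullet> (m i - m j))"
proof -
  let ?f = "\<lambda>k. bvec_e p i j k \<bullet> m k"
  have "bip n (bvec_e p i j) m = sum ?f {..<n}" unfolding bip_def ..
  also have "\<dots> = sum ?f {i, j}"
    by (rule sum.mono_neutral_right) (use ij in \<open>auto simp: bvec_e_def\<close>)
  also have "\<dots> = ?f i + ?f j" using ij by simp
  also have "\<dots> = (1 / norm (p i - p j)) * ((p i - p j) \<bullet> (m i - m j))"
    using ij by (simp add: bvec_e_def inner_diff_right algebra_simps)
  finally show ?thesis .
qed

lemma rigid_null:
  fixes p :: pos and tr w :: "real^3" and c :: nat
  assumes sc: "simplicial_complex n p T"
  defines "m \<equiv> (\<lambda>k. if k < n then tr + cross3 w (p k - p c) else 0)"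
  shows "m \<in> stiffness_null_space n p T \<gamma>"
proof -
  have bv: "m \<in> block_vectors n" unfolding block_vectors_def m_def by simp
  have z: "bip n (bvec_e p i j) m = 0" if "(i, j) \<in> edges T" for i j
  proof -
    from that obtain t where "t \<in> T" "i \<in> t" "j \<in> t" "i < j" unfolding edges_def by auto
    then have ij: "i < n" "j < n" "i \<noteq> j" using sc unfolding simplicial_complex_def by auto
    have "m i - m j = cross3 w (p i - p j)" using ij unfolding m_def by (simp add: cross3_simps forall_3)
    then show ?thesis using bip_bvec[OF ij, of p m] by (simp add: dot_cross_self)
  qed
  have "stiffness_apply n p T \<gamma> m = (\<lambda>k. 0)"
    unfolding stiffness_apply_def by (rule ext, rule sum.neutral) (auto simp: z)
  then show ?thesis using bv unfolding stiffness_null_space_def by simp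
qed

lemma orth_bound:
  assumes q: "q \<in> block_vectors n" "bip n q q = 1" "\<forall>v\<in>stiffness_null_space n p T \<gamma>. bip n q v = 0"
    and m: "m \<in> stiffness_null_space n p T \<gamma>"
  shows "1 \<le> (\<Sum>k<n. (norm (q k - m k))^2)"
proof -
  have "(\<Sum>k<n. (norm (q k - m k))^2) = (\<Sum>k<n. q k \<bullet> q k - 2 * (q k \<bullet> m k) + m k \<bullet> m k)"
    by (rule sum.cong) (auto simp: power2_norm_eq_inner inner_diff_left inner_diff_right inner_commute)
  also have "\<dots> = bip n q q - 2 * bip n q m + (\<Sum>k<n. m k \<bullet> m k)"
    unfolding bip_def by (simp add: sum.distrib sum_subtractf sum_distrib_left)
  also have "\<dots> = 1 + (\<Sum>k<n. m k \<bullet> m k)" using q m by simp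
  also have "\<dots> \<ge> 1" by (simp add: sum_nonneg)
  finally show ?thesis .
qed

lemma exists_far:
  fixes p :: pos
  assumes sc: "simplicial_complex n p T"
    and q: "q \<in> block_vectors n" "bip n q q = 1" "\<forall>v\<in>stiffness_null_space n p T \<gamma>. bip n q v = 0"
    and a: "a < n"
  shows "\<exists>k<n. 1 / real n \<le> (norm ((q k + cross3 w (p k - p c)) - (q a + cross3 w (p a - p c))))^2"
proof (rule ccontr)
  assume "\<not> ?thesis"
  then have lt: "\<forall>k<n. (norm ((q k + cross3 w (p k - p c)) - (q a + cross3 w (p a - p c))))^2 < 1 / real n" by auto
  define tr where "tr = q a + cross3 w (p a - p c)"
  define m where "m = (\<lambda>k. if k < n then tr + cross3 (- w) (p k - p c) else 0)"
  have mn: "m \<in> stiffness_null_space n p T \<gamma>" unfolding m_def by (rule rigid_null[OF sc])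
  have "1 \<le> (\<Sum>k<n. (norm (q k - m k))^2)" by (rule orth_bound[OF q mn])
  also have "\<dots> = (\<Sum>k<n. (norm ((q k + cross3 w (p k - p c)) - (q a + cross3 w (p a - p c))))^2)"
    by (rule sum.cong) (auto simp: m_def tr_def algebra_simps)
  also have "\<dots> < (\<Sum>k<n. 1 / real n)" using a lt by (intro sum_strict_mono) auto
  also have "\<dots> = 1" using a by simp
  finally show False by simp
qed

lemma connected_walk:
  assumes "connected_on S R" "finite S" "a \<in> S" "b \<in> S"
  shows "\<exists>k f. k \<le> card S * card S \<and> f 0 = a \<and> f k = b \<and> (\<forall>i<k. f i \<in> S \<and> f (Suc i) \<in> S \<and> R (f i) (f (Suc i)))"
proof -
  define Rel where "Rel = {(x,y). x \<in> S \<and> y \<in> S \<and> R x y}"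
  have sub: "Rel \<subseteq> S \<times> S" unfolding Rel_def by auto
  have fin: "finite Rel" using sub assms(2) by (meson finite_SigmaI finite_subset)
  have cR: "card Rel \<le> card S * card S" using card_mono[OF _ sub] assms(2) by (simp add: card_cartesian_product)
  have "(a, b) \<in> Rel\<^sup>*" using assms unfolding connected_on_def Rel_def by auto
  then obtain k where k: "k \<le> card Rel" "(a, b) \<in> Rel ^^ k" using rtrancl_finite_eq_relpow[OF fin] by auto
  then obtain f where "f 0 = a" "f k = b" "\<forall>i<k. (f i, f (Suc i)) \<in> Rel" using relpow_fun_conv by metis
  then show ?thesis using k(1) cR unfolding Rel_def by (intro exI[of _ k] exI[of _ f]) auto
qed

definition gwalk :: "nat set set \<Rightarrow> (nat \<Rightarrow> nat) \<Rightarrow> nat \<Rightarrow> bool" where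
  "gwalk T w d \<longleftrightarrow> (\<forall>k<d. (w k, w (Suc k)) \<in> edges T \<or> (w (Suc k), w k) \<in> edges T)"

lemma gwalk_append:
  assumes "gwalk T w1 d1" "gwalk T w2 d2" "w1 d1 = w2 0"
  shows "gwalk T (\<lambda>k. if k \<le> d1 then w1 k else w2 (k - d1)) (d1 + d2)"
  unfolding gwalk_def
proof (intro allI impI)
  fix k assume k: "k < d1 + d2"
  show "((if k \<le> d1 then w1 k else w2 (k - d1)), (if Suc k \<le> d1 then w1 (Suc k) else w2 (Suc k - d1))) \<in> edges T \<or>
        ((if Suc k \<le> d1 then w1 (Suc k) else w2 (Suc k - d1)), (if k \<le> d1 then w1 k else w2 (k - d1))) \<in> edges T"
  proof (cases "k < d1")
    case True then show ?thesis using assms(1) unfolding gwalk_def by auto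
  next
    case False
    then have "k - d1 < d2" "Suc k - d1 = Suc (k - d1)" using k by auto
    then show ?thesis using assms(2,3) False unfolding gwalk_def
      by (cases "k = d1") auto
  qed
qed

lemma same_tet_walk:
  assumes "t \<in> T" "x \<in> t" "y \<in> t"
  shows "\<exists>d w. w 0 = x \<and> w d = y \<and> gwalk T w d"
proof (cases "x = y")
  case True then show ?thesis by (intro exI[of _ 0] exI[of _ "\<lambda>_. x"]) (auto simp: gwalk_def)
next
  case False
  have "(x, y) \<in> edges T \<or> (y, x) \<in> edges T" using assms False unfolding edges_def
    by (cases "x < y") auto
  then show ?thesis by (intro exI[of _ 1] exI[of _ "\<lambda>k. if k = 0 then x else y"]) (auto simp: gwalk_def)
qed

lemma graph_connected:
  assumes st: "stiffly_connected n T" and ti: "ti \<in> T" "i \<in> ti" and tj: "tj \<in> T" "j \<in> tj"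
  shows "\<exists>d w. w 0 = i \<and> w d = j \<and> gwalk T w d"
proof -
  define Rel where "Rel = {(x,y). x \<in> T \<and> y \<in> T \<and> share_face x y}"
  have "(ti, tj) \<in> Rel\<^sup>*" using st ti tj unfolding stiffly_connected_def connected_on_def Rel_def by auto
  then have "\<forall>x\<in>tj. \<exists>d w. w 0 = i \<and> w d = x \<and> gwalk T w d"
  proof (induction rule: rtrancl_induct)
    case base
    then show ?case using same_tet_walk[OF ti] by blast
  next
    case (step t t')
    then have tT: "t \<in> T" "t' \<in> T" and sf: "card (t \<inter> t') = 3" unfolding Rel_def share_face_def by auto
    then obtain y where y: "y \<in> t" "y \<in> t'" by (metis card.empty disjoint_iff zero_neq_numeral)
    obtain d1 w1 where w1: "w1 0 = i" "w1 d1 = y" "gwalk T w1 d1" using step.IH y by blast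
    show ?case
    proof
      fix x assume "x \<in> t'"
      then obtain d2 w2 where w2: "w2 0 = y" "w2 d2 = x" "gwalk T w2 d2" using same_tet_walk[OF tT(2) y(2)] by blast
      show "\<exists>d w. w 0 = i \<and> w d = x \<and> gwalk T w d"
        using gwalk_append[OF w1(3) w2(3)] w1 w2
        by (intro exI[of _ "d1 + d2"] exI[of _ "\<lambda>k. if k \<le> d1 then w1 k else w2 (k - d1)"]) auto
    qed
  qed
  then show ?thesis using tj by blast
qed

definition twalk :: "nat set set \<Rightarrow> nat \<Rightarrow> (nat \<Rightarrow> nat set) \<Rightarrow> bool" where
  "twalk T K ts \<longleftrightarrow> (\<forall>k\<le>K. ts k \<in> T) \<and> (\<forall>k<K. share_face (ts k) (ts (Suc k)))"

lemma tet_walk: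
  assumes st: "stiffly_connected n T" and sub: "\<forall>t\<in>T. t \<subseteq> {..<n}" and fT: "finite T"
    and M: "\<forall>v<n. card {t\<in>T. v \<in> t} \<le> M"
    and w: "gwalk T w D" and t0: "t0 \<in> T" "w 0 \<in> t0"
  shows "\<exists>K ts. K \<le> M * M * D \<and> ts 0 = t0 \<and> twalk T K ts \<and> w D \<in> ts K"
  using w
proof (induction D)
  case 0
  then show ?case using t0 by (intro exI[of _ 0] exI[of _ "\<lambda>_. t0"]) (auto simp: twalk_def)
next
  case (Suc D)
  have wD: "gwalk T w D" using Suc.prems unfolding gwalk_def by auto
  obtain K ts where IH: "K \<le> M * M * D" "ts 0 = t0" "twalk T K ts" "w D \<in> ts K" using Suc.IH[OF wD] by blast
  have "(w D, w (Suc D)) \<in> edges T \<or> (w (Suc D), w D) \<in> edges T" using Suc.prems unfolding gwalk_def by auto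
  then obtain tau where tau: "tau \<in> T" "w D \<in> tau" "w (Suc D) \<in> tau" unfolding edges_def by auto
  have wn: "w D < n" using tau sub by auto
  let ?S = "{t\<in>T. w D \<in> t}"
  have con: "connected_on ?S share_face" using st wn unfolding stiffly_connected_def by auto
  have tsK: "ts K \<in> T" using IH(3) unfolding twalk_def by auto
  obtain k f where f: "k \<le> card ?S * card ?S" "f 0 = ts K" "f k = tau"
      "\<forall>i<k. f i \<in> ?S \<and> f (Suc i) \<in> ?S \<and> share_face (f i) (f (Suc i))"
    using connected_walk[OF con _ _ _, of "ts K" tau] fT tsK IH(4) tau by auto
  have cS: "card ?S * card ?S \<le> M * M" using M wn by (simp add: mult_le_mono)
  define ts' where "ts' = (\<lambda>j. if j \<le> K then ts j else f (j - K))"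
  have "twalk T (K + k) ts'"
    unfolding twalk_def
  proof (intro conjI allI impI)
    fix j assume j: "j \<le> K + k"
    show "ts' j \<in> T"
    proof (cases "j \<le> K")
      case True then show ?thesis using IH(3) unfolding ts'_def twalk_def by auto
    next
      case False
      then have "j - K = Suc (j - K - 1)" "j - K - 1 < k" using j by auto
      then show ?thesis using f(4) False unfolding ts'_def by (metis (no_types, lifting) mem_Collect_eq)
    qed
  next
    fix j assume j: "j < K + k"
    show "share_face (ts' j) (ts' (Suc j))"
    proof (cases "j < K")
      case True then show ?thesis using IH(3) unfolding ts'_def twalk_def by auto
    next
      case False
      then have "j - K < k" "Suc j - K = Suc (j - K)" using j by auto
      moreover have "ts' j = f (j - K)" using False f(2) unfolding ts'_def by (cases "j = K") auto
      ultimately show ?thesis using f(4) False unfolding ts'_def by auto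
    qed
  qed
  moreover have "ts' 0 = t0" using IH(2) unfolding ts'_def by simp
  moreover have "w (Suc D) \<in> ts' (K + k)" using f(3) tau(3) f(2) IH(4) unfolding ts'_def
    by (cases "k = 0") auto
  moreover have "K + k \<le> M * M * Suc D" using IH(1) f(1) cS by simp
  ultimately show ?case by blast
qed

lemma rot_bound:
  fixes eta e1 e2 :: "real^3"
  assumes f1: "norm (cross3 eta e1) \<le> eps" and f2: "norm (cross3 eta e2) \<le> eps"
    and l1: "norm e1 \<le> L" and l2: "norm e2 \<le> L" and al: "0 < al" "al \<le> norm (cross3 e1 e2)"
  shows "norm eta \<le> 3 * eps * L / al"
proof -
  define N where "N = cross3 e1 e2"
  have N0: "0 < norm N" using al unfolding N_def by linarith
  have e0: "0 \<le> eps" using f1 norm_ge_zero order_trans by blast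
  have L0: "0 \<le> L" using l1 norm_ge_zero order_trans by blast
  have r: "(norm N)^2 *\<^sub>R eta = ((cross3 eta e2) \<bullet> N) *\<^sub>R e1 - ((cross3 eta e1) \<bullet> N) *\<^sub>R e2 + ((cross3 eta e1) \<bullet> e2) *\<^sub>R N"
    unfolding N_def by (rule recon)
  have b1: "norm (((cross3 eta e2) \<bullet> N) *\<^sub>R e1) \<le> eps * norm N * L"
  proof -
    have "norm (((cross3 eta e2) \<bullet> N) *\<^sub>R e1) = \<bar>(cross3 eta e2) \<bullet> N\<bar> * norm e1" by simp
    also have "\<dots> \<le> (norm (cross3 eta e2) * norm N) * norm e1" by (intro mult_right_mono Cauchy_Schwarz_ineq2) auto
    also have "\<dots> \<le> (eps * norm N) * L" using f2 l1 e0 by (intro mult_mono) auto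
    finally show ?thesis by simp
  qed
  have b2: "norm (((cross3 eta e1) \<bullet> N) *\<^sub>R e2) \<le> eps * norm N * L"
  proof -
    have "norm (((cross3 eta e1) \<bullet> N) *\<^sub>R e2) = \<bar>(cross3 eta e1) \<bullet> N\<bar> * norm e2" by simp
    also have "\<dots> \<le> (norm (cross3 eta e1) * norm N) * norm e2" by (intro mult_right_mono Cauchy_Schwarz_ineq2) auto
    also have "\<dots> \<le> (eps * norm N) * L" using f1 l2 e0 by (intro mult_mono) auto
    finally show ?thesis by simp
  qed
  have b3: "norm (((cross3 eta e1) \<bullet> e2) *\<^sub>R N) \<le> eps * norm N * L"
  proof -
    have "norm (((cross3 eta e1) \<bullet> e2) *\<^sub>R N) = \<bar>(cross3 eta e1) \<bullet> e2\<bar> * norm N" by simp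
    also have "\<dots> \<le> (norm (cross3 eta e1) * norm e2) * norm N" by (intro mult_right_mono Cauchy_Schwarz_ineq2) auto
    also have "\<dots> \<le> (eps * L) * norm N" using f1 l2 e0 by (intro mult_right_mono mult_mono) auto
    finally show ?thesis by (simp add: mult_ac)
  qed
  have "(norm N)^2 * norm eta \<le> 3 * (eps * norm N * L)"
  proof -
    have "(norm N)^2 * norm eta = norm ((norm N)^2 *\<^sub>R eta)" by simp
    also have "\<dots> \<le> norm (((cross3 eta e2) \<bullet> N) *\<^sub>R e1) + norm (((cross3 eta e1) \<bullet> N) *\<^sub>R e2) + norm (((cross3 eta e1) \<bullet> e2) *\<^sub>R N)"
      unfolding r using norm_triangle_ineq[of "((cross3 eta e2) \<bullet> N) *\<^sub>R e1 - ((cross3 eta e1) \<bullet> N) *\<^sub>R e2" "((cross3 eta e1) \<bullet> e2) *\<^sub>R N"]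
        norm_triangle_ineq4[of "((cross3 eta e2) \<bullet> N) *\<^sub>R e1" "((cross3 eta e1) \<bullet> N) *\<^sub>R e2"] by linarith
    also have "\<dots> \<le> 3 * (eps * norm N * L)" using b1 b2 b3 by simp
    finally show ?thesis .
  qed
  then have "norm N * (norm N * norm eta) \<le> norm N * (3 * eps * L)" by (simp add: power2_eq_square mult_ac)
  then have "norm N * norm eta \<le> 3 * eps * L" using N0 by (simp add: mult_le_cancel_left_pos)
  then have "norm eta \<le> 3 * eps * L / norm N" using N0 by (simp add: le_divide_eq mult.commute)
  also have "\<dots> \<le> 3 * eps * L / al" using al e0 L0 N0 unfolding N_def by (intro divide_left_mono) auto
  finally show ?thesis .
qed

lemma tet_dist_le:
  assumes "\<forall>k\<le>d. ts k \<in> T" "x \<subseteq> ts 0" "y \<subseteq> ts d" "\<forall>k<d. share_face (ts k) (ts (Suc k))"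
  shows "tet_dist T x y \<le> d"
  unfolding tet_dist_def by (rule Least_le) (use assms in blast)

theorem lemma4p3:
  fixes A lmin lmax gmin gmax :: real
  assumes "0 < lmin" and "0 < gmin"
  shows "\<exists>C::nat. \<exists>c::real. c > 0 \<and>
    (\<forall>n (p::pos) (T::nat set set) (\<gamma>::nat set \<Rightarrow> real) (q::bvec) (ci::nat).
       inj_on p {..<n} \<and> (\<forall>v<n. \<exists>t\<in>T. v \<in> t) \<and>
       edge_simple A lmin lmax gmin gmax n p T \<gamma> \<and> stiffly_connected n T \<and>
       ci < n \<and> q \<in> block_vectors n \<and> bip n q q = 1 \<and>
       (\<forall>v\<in>stiffness_null_space n p T \<gamma>. bip n q v = 0)
     \<longrightarrow> (\<exists>s1 s2 s3 i j. oriented_triangle T (s1, s2, s3) \<and> i < n \<and> j < n \<and>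
            tet_dist T {i} {s1, s2, s3} \<le> C \<and> tet_dist T {j} {s1, s2, s3} \<le> C \<and>
            (norm (centering p ci q (s1, s2, s3) i - centering p ci q (s1, s2, s3) j))\<^sup>2
              \<ge> c / (real (diameter n T) ^ 4 * real n)))"
proof -
  define al where "al = lmin * (lmin / A)"
  define kap where "kap = 6 * lmax / al"
  define M where "M = star_bound A lmin lmax"
  define MW where "MW = M * M"
  define B where "B = (real MW + 1)^4 * (1 + \<bar>kap\<bar> * \<bar>lmax\<bar>)^2"
  define c where "c = 1 / (2 * B)"
  have h1: "1 \<le> (real MW + 1)^4" by (rule one_le_power) simp
  have h2: "1 \<le> (1 + \<bar>kap\<bar> * \<bar>lmax\<bar>)^2" by (rule one_le_power) simp
  have B1: "1 \<le> B" unfolding B_def using mult_mono[OF h1 h2] by simp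
  have c0: "0 < c" unfolding c_def using B1 by simp
  show ?thesis
  proof (rule exI[of _ 1], rule exI[of _ c], intro conjI c0 allI impI)
    fix n p T \<gamma> q ci
    assume H: "inj_on p {..<n} \<and> (\<forall>v<n. \<exists>t\<in>T. v \<in> t) \<and>
       edge_simple A lmin lmax gmin gmax n p T \<gamma> \<and> stiffly_connected n T \<and>
       ci < n \<and> q \<in> block_vectors n \<and> bip n q q = 1 \<and>
       (\<forall>v\<in>stiffness_null_space n p T \<gamma>. bip n q v = 0)"
    then have inj: "inj_on p {..<n}" and cov: "\<forall>v<n. \<exists>t\<in>T. v \<in> t"
      and es: "edge_simple A lmin lmax gmin gmax n p T \<gamma>" and st: "stiffly_connected n T"
      and ci: "ci < n" and qb: "q \<in> block_vectors n" and qq: "bip n q q = 1"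
      and qo: "\<forall>v\<in>stiffness_null_space n p T \<gamma>. bip n q v = 0" by auto
    define Del where "Del = diameter n T"
    define dl where "dl = c / (real Del ^ 4 * real n)"
    show "\<exists>s1 s2 s3 i j. oriented_triangle T (s1, s2, s3) \<and> i < n \<and> j < n \<and>
            tet_dist T {i} {s1, s2, s3} \<le> 1 \<and> tet_dist T {j} {s1, s2, s3} \<le> 1 \<and>
            (norm (centering p ci q (s1, s2, s3) i - centering p ci q (s1, s2, s3) j))\<^sup>2
              \<ge> c / (real (diameter n T) ^ 4 * real n)"
    proof (rule ccontr)
      assume "\<not> ?thesis"
      then have NC: "\<And>s1 s2 s3 i j. oriented_triangle T (s1, s2, s3) \<Longrightarrow> i < n \<Longrightarrow> j < n \<Longrightarrow>
            tet_dist T {i} {s1, s2, s3} \<le> 1 \<Longrightarrow> tet_dist T {j} {s1, s2, s3} \<le> 1 \<Longrightarrow>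
            (norm (centering p ci q (s1, s2, s3) i - centering p ci q (s1, s2, s3) j))\<^sup>2 < dl"
        unfolding dl_def Del_def by force
      have sc: "simplicial_complex n p T" using es unfolding edge_simple_def by simp
      have sub: "\<forall>t\<in>T. t \<subseteq> {..<n}" using sc unfolding simplicial_complex_def by simp
      have fT: "finite T"
      proof -
        have "T \<subseteq> Pow {..<n}" using sub by auto
        then show ?thesis by (rule finite_subset) simp
      qed
      obtain t0 where t0: "t0 \<in> T" "ci \<in> t0" using cov ci by blast
      have A0: "0 < A" by (rule tet_geom_T(1)[OF es inj assms(1) t0(1)])
      have al0: "0 < al" unfolding al_def using A0 assms(1) by simp
      have n0: "0 < n" using ci by simp
      have ex_tri: "\<forall>t\<in>T. \<exists>s. fst s \<in> t \<and> fst (snd s) \<in> t \<and> snd (snd s) \<in> t \<and> fst s \<noteq> fst (snd s) \<and>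
                fst s \<noteq> snd (snd s) \<and> fst (snd s) \<noteq> snd (snd s)"
      proof
        fix t assume "t \<in> T"
        then have "card t = 4" using sc unfolding simplicial_complex_def by simp
        then obtain a b c d where "t = {a,b,c,d}" "a \<noteq> b" "a \<noteq> c" "b \<noteq> c" using card4_split by blast
        then show "\<exists>s. fst s \<in> t \<and> fst (snd s) \<in> t \<and> snd (snd s) \<in> t \<and> fst s \<noteq> fst (snd s) \<and>
                fst s \<noteq> snd (snd s) \<and> fst (snd s) \<noteq> snd (snd s)" by (intro exI[of _ "(a,b,c)"]) auto
      qed
      obtain tri where tri: "\<And>t. t \<in> T \<Longrightarrow> fst (tri t) \<in> t \<and> fst (snd (tri t)) \<in> t \<and> snd (snd (tri t)) \<in> t \<and>
          fst (tri t) \<noteq> fst (snd (tri t)) \<and> fst (tri t) \<noteq> snd (snd (tri t)) \<and> fst (snd (tri t)) \<noteq> snd (snd (tri t))"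
        using bchoice[OF ex_tri] by blast
      define a1 where "a1 t = fst (tri t)" for t
      define a2 where "a2 t = fst (snd (tri t))" for t
      define a3 where "a3 t = snd (snd (tri t))" for t
      have tri': "a1 t \<in> t" "a2 t \<in> t" "a3 t \<in> t" "a1 t \<noteq> a2 t" "a1 t \<noteq> a3 t" "a2 t \<noteq> a3 t" if "t \<in> T" for t
        using tri[OF that] unfolding a1_def a2_def a3_def by auto
      have ot: "oriented_triangle T (a1 t, a2 t, a3 t)" if "t \<in> T" for t
        unfolding oriented_triangle_def using tri'[OF that] that by auto
      have faceN: "al \<le> norm (cross3 (p (a2 t) - p (a1 t)) (p (a3 t) - p (a1 t)))" if "t \<in> T" for t
        unfolding al_def using tet_geom_T(2)[OF es inj assms(1) that] tri'[OF that] by simp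
      have ex_om: "\<forall>t\<in>T. \<exists>w. centering p ci q (a1 t, a2 t, a3 t) = (\<lambda>i. q i + cross3 w (p i - p ci))"
      proof
        fix t assume "t \<in> T"
        then have "cross3 (p (a2 t) - p (a1 t)) (p (a3 t) - p (a1 t)) \<noteq> 0" using faceN al0
          by (metis norm_zero not_le)
        then show "\<exists>w. centering p ci q (a1 t, a2 t, a3 t) = (\<lambda>i. q i + cross3 w (p i - p ci))"
          by (rule centering_form)
      qed
      obtain om where om: "\<And>t. t \<in> T \<Longrightarrow> centering p ci q (a1 t, a2 t, a3 t) = (\<lambda>i. q i + cross3 (om t) (p i - p ci))"
        using bchoice[OF ex_om] by blast
      define Q where "Q t i = q i + cross3 (om t) (p i - p ci)" for t i
      have Qc: "centering p ci q (a1 t, a2 t, a3 t) i = Q t i" if "t \<in> T" for t i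
        using om[OF that] unfolding Q_def by simp
      have dl0: "0 \<le> dl" unfolding dl_def using c0 by simp
      have L1: "norm (Q t i - Q t j) \<le> sqrt dl" if "t \<in> T" "i \<in> t" "j \<in> t" for t i j
      proof -
        have ij: "i < n" "j < n" using sub that by auto
        have td: "tet_dist T {x} {a1 t, a2 t, a3 t} \<le> 1" if "x \<in> t" for x
        proof -
          have "tet_dist T {x} {a1 t, a2 t, a3 t} \<le> 0"
            by (rule tet_dist_le[of 0 "\<lambda>_. t"]) (use \<open>t \<in> T\<close> that tri'[OF \<open>t \<in> T\<close>] in auto)
          then show ?thesis by simp
        qed
        have "(norm (Q t i - Q t j))^2 < dl" using NC[OF ot[OF that(1)] ij td[OF that(2)] td[OF that(3)]]
          unfolding Qc[OF that(1)] .
        then show ?thesis using real_le_rsqrt less_imp_le by blast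
      qed
      have L2: "norm (om t - om t') \<le> kap * sqrt dl" if "t \<in> T" "t' \<in> T" "share_face t t'" for t t'
      proof -
        have td: "tet_dist T {x} {a1 t, a2 t, a3 t} \<le> 1" if "x \<in> t'" for x
          by (rule tet_dist_le[of 1 "\<lambda>k. if k = 0 then t' else t"])
             (use \<open>t \<in> T\<close> \<open>t' \<in> T\<close> that tri'[OF \<open>t \<in> T\<close>] \<open>share_face t t'\<close> in
              \<open>auto simp: share_face_def Int_commute\<close>)
        let ?y1 = "a1 t'" and ?y2 = "a2 t'" and ?y3 = "a3 t'"
        have yt: "?y1 \<in> t'" "?y2 \<in> t'" "?y3 \<in> t'" using tri'[OF that(2)] by auto
        have yn: "?y1 < n" "?y2 < n" "?y3 < n" using yt sub that(2) by auto
        have bnd: "norm (Q t y - Q t ?y1) \<le> sqrt dl" if "y \<in> t'" for y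
        proof -
          have "y < n" using that sub \<open>t' \<in> T\<close> by auto
          then have "(norm (Q t y - Q t ?y1))^2 < dl"
            using NC[OF ot[OF \<open>t \<in> T\<close>] _ yn(1) td[OF that] td[OF yt(1)]] unfolding Qc[OF \<open>t \<in> T\<close>] by blast
          then show ?thesis using real_le_rsqrt less_imp_le by blast
        qed
        have fb: "norm (cross3 (om t - om t') (p y - p ?y1)) \<le> 2 * sqrt dl" if "y \<in> t'" for y
        proof -
          have "cross3 (om t - om t') (p y - p ?y1) = (Q t y - Q t ?y1) - (Q t' y - Q t' ?y1)"
            unfolding Q_def by (simp add: cross3_simps forall_3)
          also have "norm \<dots> \<le> norm (Q t y - Q t ?y1) + norm (Q t' y - Q t' ?y1)" by (rule norm_triangle_ineq4)
          also have "\<dots> \<le> 2 * sqrt dl" using bnd[OF that] L1[OF \<open>t' \<in> T\<close> that yt(1)] by simp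
          finally show ?thesis .
        qed
        have el: "norm (p y - p ?y1) \<le> lmax" if "y \<in> t'" "y \<noteq> ?y1" for y
          using edge_len[OF es \<open>t' \<in> T\<close> that(1) yt(1) that(2)] by (simp add: dist_norm)
        have "norm (om t - om t') \<le> 3 * (2 * sqrt dl) * lmax / al"
          by (rule rot_bound[OF fb[OF yt(2)] fb[OF yt(3)] el[OF yt(2)] el[OF yt(3)] al0 faceN[OF that(2)]])
             (use tri'[OF that(2)] in auto)
        then show ?thesis unfolding kap_def by (simp add: mult_ac)
      qed
      have lmax0: "0 \<le> lmax"
      proof -
        have "lmin \<le> dist (p (a1 t0)) (p (a2 t0)) \<and> dist (p (a1 t0)) (p (a2 t0)) \<le> lmax"
          using edge_len[OF es t0(1)] tri'[OF t0(1)] by blast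
        then show ?thesis using assms(1) by linarith
      qed
      have kap0: "0 \<le> kap" unfolding kap_def using lmax0 al0 by simp
      define a where "a = a1 t0"
      have at0: "a \<in> t0" unfolding a_def using tri'[OF t0(1)] by simp
      have an: "a < n" using at0 sub t0 by auto
      obtain v where vn: "v < n" and far0: "1 / real n \<le> (norm ((q v + cross3 (om t0) (p v - p ci)) - (q a + cross3 (om t0) (p a - p ci))))^2"
        using exists_far[OF sc qb qq qo an] by blast
      have far: "1 / real n \<le> (norm (Q t0 v - Q t0 a))^2" using far0 unfolding Q_def .
      obtain tv where tv: "tv \<in> T" "v \<in> tv" using cov vn by blast
      define D where "D = graph_dist T a v"
      have "\<exists>d w. w 0 = a \<and> w d = v \<and> gwalk T w d" by (rule graph_connected[OF st t0(1) at0 tv])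
      then have "\<exists>w. w 0 = a \<and> w D = v \<and> gwalk T w D"
        unfolding D_def graph_dist_def gwalk_def by (rule LeastI_ex)
      then obtain w where w: "w 0 = a" "w D = v" "gwalk T w D" by blast
      have DDel: "D \<le> Del"
      proof -
        have "{graph_dist T i j | i j. i < n \<and> j < n} \<subseteq> (\<lambda>(i,j). graph_dist T i j) ` ({..<n} \<times> {..<n})"
          by auto
        then have fin: "finite {graph_dist T i j | i j. i < n \<and> j < n}" by (rule finite_subset) simp
        have mem: "graph_dist T a v \<in> {graph_dist T i j | i j. i < n \<and> j < n}" using an vn by blast
        show ?thesis unfolding D_def Del_def diameter_def by (rule Max_ge[OF fin mem])
      qed
      have Mb: "\<forall>x<n. card {t\<in>T. x \<in> t} \<le> M" unfolding M_def using star_card[OF es inj assms(1)] by simp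
      have w0t0: "w 0 \<in> t0" using w(1) at0 by simp
      obtain K ts where K: "K \<le> M * M * D" and ts0: "ts 0 = t0" and tw: "twalk T K ts" and vK: "v \<in> ts K"
        using tet_walk[OF st sub fT Mb w(3) t0(1) w0t0] unfolding w(2) by blast
      have tsT: "ts k \<in> T" if "k \<le> K" for k using tw that unfolding twalk_def by auto
      have tsf: "share_face (ts k) (ts (Suc k))" if "k < K" for k using tw that unfolding twalk_def by auto
      have drift: "norm (om t0 - om (ts k)) \<le> real k * (kap * sqrt dl)" if "k \<le> K" for k
        using that
      proof (induction k)
        case 0 then show ?case using ts0 by simp
      next
        case (Suc k)
        have "norm (om t0 - om (ts (Suc k))) \<le> norm (om t0 - om (ts k)) + norm (om (ts k) - om (ts (Suc k)))"
          using norm_triangle_ineq[of "om t0 - om (ts k)" "om (ts k) - om (ts (Suc k))"] by simp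
        also have "\<dots> \<le> real k * (kap * sqrt dl) + kap * sqrt dl"
        proof (rule add_mono)
          show "norm (om t0 - om (ts k)) \<le> real k * (kap * sqrt dl)" using Suc.IH Suc.prems by simp
          show "norm (om (ts k) - om (ts (Suc k))) \<le> kap * sqrt dl"
            using L2[of "ts k" "ts (Suc k)"] tsT[of k] tsT[of "Suc k"] tsf[of k] Suc.prems by simp
        qed
        finally show ?case by (simp add: algebra_simps)
      qed
      have ne: "ts k \<inter> ts (Suc k) \<noteq> {}" if "k < K" for k
        using tsf[OF that] unfolding share_face_def by (metis card.empty zero_neq_numeral)
      define y where "y k = (if k = 0 then a else if k - 1 < K then (SOME x. x \<in> ts (k - 1) \<inter> ts k) else v)" for k
      have yk: "y k \<in> ts k" if "k \<le> K" for k
      proof (cases "k = 0")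
        case True then show ?thesis using ts0 at0 unfolding y_def by simp
      next
        case False
        then have "k - 1 < K" "Suc (k - 1) = k" using that by auto
        then show ?thesis using someI_ex[of "\<lambda>x. x \<in> ts (k - 1) \<inter> ts k"] ne[of "k - 1"] False unfolding y_def by auto
      qed
      have ySk: "y (Suc k) \<in> ts k" if "k \<le> K" for k
      proof (cases "k < K")
        case True then show ?thesis using someI_ex[of "\<lambda>x. x \<in> ts k \<inter> ts (Suc k)"] ne[OF True] unfolding y_def by auto
      next
        case False then show ?thesis using vK that unfolding y_def by auto
      qed
      have y0: "y 0 = a" and yK: "y (Suc K) = v" unfolding y_def by auto
      have tb: "norm (Q t0 (y (Suc k)) - Q t0 (y k)) \<le> sqrt dl * (1 + real K * kap * lmax)" if "k < Suc K" for k
      proof -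
        have kK: "k \<le> K" using that by simp
        have eq: "Q t0 (y (Suc k)) - Q t0 (y k) = (Q (ts k) (y (Suc k)) - Q (ts k) (y k)) + cross3 (om t0 - om (ts k)) (p (y (Suc k)) - p (y k))"
          unfolding Q_def by (simp add: cross3_simps forall_3)
        have pl: "norm (p (y (Suc k)) - p (y k)) \<le> lmax"
        proof (cases "y (Suc k) = y k")
          case True then show ?thesis using lmax0 by simp
        next
          case False then show ?thesis using edge_len[OF es tsT[OF kK] ySk[OF kK] yk[OF kK] False] by (simp add: dist_norm)
        qed
        have "norm (cross3 (om t0 - om (ts k)) (p (y (Suc k)) - p (y k))) \<le> norm (om t0 - om (ts k)) * norm (p (y (Suc k)) - p (y k))"
          by (rule norm_cross_le)
        also have "\<dots> \<le> (real k * (kap * sqrt dl)) * lmax" using drift[OF kK] pl kap0 dl0 by (intro mult_mono) auto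
        also have "\<dots> \<le> (real K * (kap * sqrt dl)) * lmax" using kK kap0 lmax0 dl0 by (intro mult_right_mono mult_right_mono) auto
        finally have c2: "norm (cross3 (om t0 - om (ts k)) (p (y (Suc k)) - p (y k))) \<le> real K * (kap * sqrt dl) * lmax" .
        have c1: "norm (Q (ts k) (y (Suc k)) - Q (ts k) (y k)) \<le> sqrt dl" by (rule L1[OF tsT[OF kK] ySk[OF kK] yk[OF kK]])
        have "norm (Q t0 (y (Suc k)) - Q t0 (y k)) \<le> sqrt dl + real K * (kap * sqrt dl) * lmax"
          unfolding eq using norm_triangle_ineq[of "Q (ts k) (y (Suc k)) - Q (ts k) (y k)"] c1 c2 by (smt (verit))
        then show ?thesis by (simp add: algebra_simps)
      qed
      have tel: "Q t0 v - Q t0 a = (\<Sum>k<Suc K. Q t0 (y (Suc k)) - Q t0 (y k))"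
        using sum_lessThan_telescope[of "\<lambda>k. Q t0 (y k)" "Suc K"] y0 yK by simp
      have X: "norm (Q t0 v - Q t0 a) \<le> (real K + 1) * (sqrt dl * (1 + real K * kap * lmax))"
      proof -
        have "norm (Q t0 v - Q t0 a) \<le> (\<Sum>k<Suc K. norm (Q t0 (y (Suc k)) - Q t0 (y k)))" unfolding tel by (rule norm_sum)
        also have "\<dots> \<le> (\<Sum>k<Suc K. sqrt dl * (1 + real K * kap * lmax))" by (rule sum_mono) (use tb in auto)
        also have "\<dots> = (real K + 1) * (sqrt dl * (1 + real K * kap * lmax))" by simp
        finally show ?thesis .
      qed
      have D1: "1 \<le> D"
      proof (rule ccontr)
        assume "\<not> 1 \<le> D" then have "D = 0" by simp
        then have "v = a" using w(1,2) by simp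
        then show False using far n0 by simp
      qed
      have Del1: "1 \<le> Del" using D1 DDel by simp
      have Knat: "K + 1 \<le> (MW + 1) * Del"
      proof -
        have "K \<le> MW * D" using K unfolding MW_def by simp
        also have "\<dots> \<le> MW * Del" using DDel by simp
        finally show ?thesis using Del1 by simp
      qed
      define Z where "Z = (real MW + 1) * real Del"
      have K1: "real K + 1 \<le> Z" unfolding Z_def using Knat by (metis of_nat_1 of_nat_add of_nat_le_iff of_nat_mult)
      have Z0: "0 \<le> Z" unfolding Z_def by simp
      define e where "e = 1 + kap * lmax"
      have e1: "1 \<le> e" unfolding e_def using kap0 lmax0 by simp
      have kl: "1 + real K * kap * lmax \<le> (real K + 1) * e"
      proof -
        have "0 \<le> kap * lmax" using kap0 lmax0 by simp
        then show ?thesis unfolding e_def by (simp add: algebra_simps)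
      qed
      have sd0: "0 \<le> sqrt dl" using dl0 by simp
      have Xb: "norm (Q t0 v - Q t0 a) \<le> Z^2 * e * sqrt dl"
      proof -
        have "norm (Q t0 v - Q t0 a) \<le> (real K + 1) * (sqrt dl * (1 + real K * kap * lmax))" by (rule X)
        also have "\<dots> \<le> (real K + 1) * (sqrt dl * ((real K + 1) * e))"
          using kl sd0 by (intro mult_left_mono) auto
        also have "\<dots> = (real K + 1)^2 * e * sqrt dl" by (simp add: power2_eq_square mult_ac)
        also have "\<dots> \<le> Z^2 * e * sqrt dl"
          using K1 e1 sd0 by (intro mult_right_mono power_mono) auto
        finally show ?thesis .
      qed
      have "(norm (Q t0 v - Q t0 a))^2 \<le> (Z^2 * e * sqrt dl)^2" using Xb by (intro power_mono) auto
      also have "\<dots> = Z^4 * e^2 * dl" using dl0 by (simp add: power_mult_distrib power2_eq_square[of "Z^2"])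
      also have "\<dots> = B * c / real n"
      proof -
        have eB: "B = (real MW + 1)^4 * e^2" unfolding B_def e_def using kap0 lmax0 by simp
        define P where "P = real Del ^ 4"
        define R where "R = (real MW + 1)^4"
        have P0: "P \<noteq> 0" unfolding P_def using Del1 by simp
        have Z4: "Z^4 = R * P" unfolding Z_def R_def P_def by (rule power_mult_distrib)
        have dl': "dl = c / (P * real n)" unfolding dl_def P_def by simp
        have "Z^4 * e^2 * dl = (R * e^2 * c) * (P / P) / real n" unfolding Z4 dl' by (simp add: field_simps)
        also have "\<dots> = B * c / real n" unfolding eB R_def using P0 by simp
        finally show ?thesis .
      qed
      also have "\<dots> = 1 / (2 * real n)" unfolding c_def using B1 by simp
      finally have "1 / real n \<le> 1 / (2 * real n)" using far by linarith
      then show False using n0 by (simp add: divide_le_eq)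
    qed
  qed
qed

end
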